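(* Let $(\mathcal A,u)$ be either $(k[\Delta_{\mathrm{inj}}],u_\Delta)$ or $(k[\square_{\mathrm{inj}}],u_\square)$, and write $\mathbf n$ for $[n]$ in the first case and $\square_n$ in the second. The representable left $\mathcal A$-modules $P_n:=\mathcal A(\mathbf n,-)$, $n\ge0$, with differentials $P_n\to P_{n-1}$ given by precomposition with $u(d_n)\colon\mathbf{n-1}\to\mathbf n$, form an augmented projective resolution \[\cdots\to P_2\to P_1\to P_0\xrightarrow{\varepsilon}k_\bullet\to0\] in $\mathrm{lmod}(\mathcal A)$, where $\varepsilon$ sends every basis morphism to $1\in k$.
   Context: $k$ is a field; $k[\mathcal C]$ is the $k$-linearization of a small category $\mathcal C$. Left modules over a $k$-linear category $\mathcal A$ are $k$-linear functors $\mathcal A\to\mathrm{Vect}_k$. $\Delta_{\mathrm{inj}}$: objects $[n]=\{0<\dots<n\}$, $n\ge0$, injective order-preserving maps; $\delta^i\colon[n-1]\to[n]$ omits $i$. $\square_{\mathrm{inj}}$: objects $\square_n=\{0,1\}^n$, $n\ge0$, morphisms the composites of coface maps $\delta_i^\varepsilon\colon\square_{n-1}\to\square_n$ ($\varepsilon\in\{0,1\}$, $1\le i\le n$) inserting $\varepsilon$ as $i$-th coordinate. $\Omega$ is the $k$-linear category with objects $[n]$, $n\ge0$, generated by $d_n\colon[n-1]\to[n]$, $n\ge1$, with relations $d_{n+1}d_n=0$. $u_\Delta\colon\Omega\to k[\Delta_{\mathrm{inj}}]$ is $[n]\mapsto[n]$, $d_n\mapsto\sum_{i=0}^n(-1)^i\delta^i$;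 $u_\square\colon\Omega\to k[\square_{\mathrm{inj}}]$ is $[n]\mapsto\square_n$, $d_n\mapsto\sum_{i=1}^n(-1)^{i-1}(\delta_i^1-\delta_i^0)$. $k_\bullet$ is the constant left $\mathcal A$-module with value $k$ at every object and every morphism acting by the identity. *)

theory Defs
  imports "HOL-Library.FuncSet"
begin

definition vzero :: "'x \<Rightarrow> 'k::field" where "vzero = (\<lambda>_. 0)"
definition vadd :: "('x \<Rightarrow> 'k::field) \<Rightarrow> ('x \<Rightarrow> 'k) \<Rightarrow> ('x \<Rightarrow> 'k)"
  where "vadd v w = (\<lambda>x. v x + w x)"
definition vscale :: "'k::field \<Rightarrow> ('x \<Rightarrow> 'k) \<Rightarrow> ('x \<Rightarrow> 'k)"
  where "vscale a v = (\<lambda>x. a * v x)"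

definition ksubspace :: "('x \<Rightarrow> 'k::field) set \<Rightarrow> bool" where
  "ksubspace S \<longleftrightarrow> vzero \<in> S \<and> (\<forall>v\<in>S. \<forall>w\<in>S. vadd v w \<in> S) \<and> (\<forall>a. \<forall>v\<in>S. vscale a v \<in> S)"

definition klinear :: "('x \<Rightarrow> 'k::field) set \<Rightarrow> (('x \<Rightarrow> 'k) \<Rightarrow> ('y \<Rightarrow> 'k)) \<Rightarrow> bool" where
  "klinear S f \<longleftrightarrow> (\<forall>v\<in>S. \<forall>w\<in>S. f (vadd v w) = vadd (f v) (f w)) \<and>
                    (\<forall>a. \<forall>v\<in>S. f (vscale a v) = vscale a (f v))"

text \<open>The category is given by object carriers obj n, hom-sets Hom n m of
  extensional functions on obj n, composition = FuncSet compose, identity = restricted id.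
  A k-linear functor k[C] -> Vect_k is the same as a functor C -> Vect_k; a module is
  given by subspaces M m of a function space 'x => k and actions act n m phi.\<close>

definition lmod :: "(nat \<Rightarrow> 'a set) \<Rightarrow> (nat \<Rightarrow> nat \<Rightarrow> ('a \<Rightarrow> 'a) set) \<Rightarrow>
    (nat \<Rightarrow> ('x \<Rightarrow> 'k::field) set) \<Rightarrow> (nat \<Rightarrow> nat \<Rightarrow> ('a \<Rightarrow> 'a) \<Rightarrow> ('x \<Rightarrow> 'k) \<Rightarrow> ('x \<Rightarrow> 'k)) \<Rightarrow> bool" where
  "lmod obj Hom M act \<longleftrightarrow>
     (\<forall>m. ksubspace (M m)) \<and>
     (\<forall>n m \<phi>. \<phi> \<in> Hom n m \<longrightarrow> (\<forall>v\<in>M n. act n m \<phi> v \<in> M m) \<and> klinear (M n) (act n m \<phi>)) \<and>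
     (\<forall>n. \<forall>v\<in>M n. act n n (\<lambda>x\<in>obj n. x) v = v) \<and>
     (\<forall>n m p \<phi> \<psi>. \<phi> \<in> Hom n m \<longrightarrow> \<psi> \<in> Hom m p \<longrightarrow>
        (\<forall>v\<in>M n. act n p (compose (obj n) \<psi> \<phi>) v = act m p \<psi> (act n m \<phi> v)))"

definition lmod_hom :: "(nat \<Rightarrow> nat \<Rightarrow> ('a \<Rightarrow> 'a) set) \<Rightarrow>
    (nat \<Rightarrow> ('x \<Rightarrow> 'k::field) set) \<Rightarrow> (nat \<Rightarrow> nat \<Rightarrow> ('a \<Rightarrow> 'a) \<Rightarrow> ('x \<Rightarrow> 'k) \<Rightarrow> ('x \<Rightarrow> 'k)) \<Rightarrow>
    (nat \<Rightarrow> ('y \<Rightarrow> 'k) set) \<Rightarrow> (nat \<Rightarrow> nat \<Rightarrow> ('a \<Rightarrow> 'a) \<Rightarrow> ('y \<Rightarrow> 'k) \<Rightarrow> ('y \<Rightarrow> 'k)) \<Rightarrow>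
    (nat \<Rightarrow> ('x \<Rightarrow> 'k) \<Rightarrow> ('y \<Rightarrow> 'k)) \<Rightarrow> bool" where
  "lmod_hom Hom M actM N actN f \<longleftrightarrow>
     (\<forall>m. \<forall>v\<in>M m. f m v \<in> N m) \<and> (\<forall>m. klinear (M m) (f m)) \<and>
     (\<forall>n m \<phi>. \<phi> \<in> Hom n m \<longrightarrow> (\<forall>v\<in>M n. f m (actM n m \<phi> v) = actN n m \<phi> (f n v)))"

text \<open>Test modules live in 'x => k and
  'y => k for arbitrary types 'x, 'y (every vector space embeds in such a space).\<close>

definition projective_lmod :: "'x itself \<Rightarrow> 'y itself \<Rightarrow> (nat \<Rightarrow> 'a set) \<Rightarrow> (nat \<Rightarrow> nat \<Rightarrow> ('a \<Rightarrow> 'a) set) \<Rightarrow>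
    (nat \<Rightarrow> ('z \<Rightarrow> 'k::field) set) \<Rightarrow> (nat \<Rightarrow> nat \<Rightarrow> ('a \<Rightarrow> 'a) \<Rightarrow> ('z \<Rightarrow> 'k) \<Rightarrow> ('z \<Rightarrow> 'k)) \<Rightarrow> bool" where
  "projective_lmod _ _ obj Hom P actP \<longleftrightarrow>
     (\<forall>(M :: nat \<Rightarrow> ('x \<Rightarrow> 'k) set) actM (N :: nat \<Rightarrow> ('y \<Rightarrow> 'k) set) actN f g.
        lmod obj Hom M actM \<and> lmod obj Hom N actN \<and> lmod_hom Hom M actM N actN f \<and>
        (\<forall>m. f m ` M m = N m) \<and> lmod_hom Hom P actP N actN g \<longrightarrow>
        (\<exists>h. lmod_hom Hom P actP M actM h \<and> (\<forall>m. \<forall>v\<in>P m. f m (h m v) = g m v)))"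

text \<open>Elements of k[Hom(n,m)]: finitely supported k-valued functions on Hom n m.\<close>
definition Pmod :: "(nat \<Rightarrow> nat \<Rightarrow> ('a \<Rightarrow> 'a) set) \<Rightarrow> nat \<Rightarrow> nat \<Rightarrow> (('a \<Rightarrow> 'a) \<Rightarrow> 'k::field) set" where
  "Pmod Hom n m = {c. finite {\<phi>. c \<phi> \<noteq> 0} \<and> (\<forall>\<phi>. c \<phi> \<noteq> 0 \<longrightarrow> \<phi> \<in> Hom n m)}"

definition actP :: "(nat \<Rightarrow> 'a set) \<Rightarrow> (nat \<Rightarrow> nat \<Rightarrow> ('a \<Rightarrow> 'a) set) \<Rightarrow> nat \<Rightarrow>
    nat \<Rightarrow> nat \<Rightarrow> ('a \<Rightarrow> 'a) \<Rightarrow> (('a \<Rightarrow> 'a) \<Rightarrow> 'k::field) \<Rightarrow> (('a \<Rightarrow> 'a) \<Rightarrow> 'k)" where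
  "actP obj Hom n p q \<alpha> c = (\<lambda>\<chi>. \<Sum>\<phi>\<in>Hom n p. if compose (obj n) \<alpha> \<phi> = \<chi> then c \<phi> else 0)"

text \<open>Differential P_n(m) -> P_{n-1}(m), n >= 1: precomposition with the formal
  combination ud n = u(d_n) in k[Hom(n-1,n)].\<close>
definition dP :: "(nat \<Rightarrow> 'a set) \<Rightarrow> (nat \<Rightarrow> nat \<Rightarrow> ('a \<Rightarrow> 'a) set) \<Rightarrow>
    (nat \<Rightarrow> ('a \<Rightarrow> 'a) \<Rightarrow> 'k::field) \<Rightarrow> nat \<Rightarrow> nat \<Rightarrow> (('a \<Rightarrow> 'a) \<Rightarrow> 'k) \<Rightarrow> (('a \<Rightarrow> 'a) \<Rightarrow> 'k)" where
  "dP obj Hom ud n m c = (\<lambda>\<psi>. \<Sum>\<phi>\<in>Hom n m. \<Sum>\<theta>\<in>Hom (n - 1) n.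
       if compose (obj (n - 1)) \<phi> \<theta> = \<psi> then c \<phi> * ud n \<theta> else 0)"

definition aug :: "(nat \<Rightarrow> nat \<Rightarrow> ('a \<Rightarrow> 'a) set) \<Rightarrow> nat \<Rightarrow> (('a \<Rightarrow> 'a) \<Rightarrow> 'k::field) \<Rightarrow> 'k" where
  "aug Hom m c = (\<Sum>\<phi>\<in>Hom 0 m. c \<phi>)"

definition proj_resolution :: "'x itself \<Rightarrow> 'y itself \<Rightarrow> (nat \<Rightarrow> 'a set) \<Rightarrow>
    (nat \<Rightarrow> nat \<Rightarrow> ('a \<Rightarrow> 'a) set) \<Rightarrow> (nat \<Rightarrow> ('a \<Rightarrow> 'a) \<Rightarrow> 'k::field) \<Rightarrow> bool" where
  "proj_resolution tx ty obj Hom ud \<longleftrightarrow>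
     (\<forall>n. lmod obj Hom (Pmod Hom n :: nat \<Rightarrow> (('a \<Rightarrow> 'a) \<Rightarrow> 'k) set) (actP obj Hom n)) \<and>
     (\<forall>n. projective_lmod tx ty obj Hom (Pmod Hom n :: nat \<Rightarrow> (('a \<Rightarrow> 'a) \<Rightarrow> 'k) set) (actP obj Hom n)) \<and>
     (\<forall>n. n \<ge> 1 \<longrightarrow> lmod_hom Hom (Pmod Hom n :: nat \<Rightarrow> (('a \<Rightarrow> 'a) \<Rightarrow> 'k) set) (actP obj Hom n)
                         (Pmod Hom (n - 1) :: nat \<Rightarrow> (('a \<Rightarrow> 'a) \<Rightarrow> 'k) set) (actP obj Hom (n - 1)) (dP obj Hom ud n)) \<and>
     (\<forall>m. klinear (Pmod Hom 0 m :: (('a \<Rightarrow> 'a) \<Rightarrow> 'k) set) (\<lambda>c (_::unit). aug Hom m c)) \<and>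
     (\<forall>p q \<alpha>. \<alpha> \<in> Hom p q \<longrightarrow> (\<forall>c\<in>(Pmod Hom 0 p :: (('a \<Rightarrow> 'a) \<Rightarrow> 'k) set). aug Hom q (actP obj Hom 0 p q \<alpha> c) = aug Hom p c)) \<and>
     (\<forall>m (a::'k). \<exists>c\<in>(Pmod Hom 0 m :: (('a \<Rightarrow> 'a) \<Rightarrow> 'k) set). aug Hom m c = a) \<and>
     (\<forall>m. \<forall>c\<in>(Pmod Hom 0 m :: (('a \<Rightarrow> 'a) \<Rightarrow> 'k) set). aug Hom m c = 0 \<longleftrightarrow> (\<exists>b\<in>(Pmod Hom 1 m :: (('a \<Rightarrow> 'a) \<Rightarrow> 'k) set). dP obj Hom ud 1 m b = c)) \<and>
     (\<forall>n m. n \<ge> 1 \<longrightarrow> (\<forall>c\<in>(Pmod Hom n m :: (('a \<Rightarrow> 'a) \<Rightarrow> 'k) set).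
         dP obj Hom ud n m c = (\<lambda>_. 0) \<longleftrightarrow> (\<exists>b\<in>(Pmod Hom (Suc n) m :: (('a \<Rightarrow> 'a) \<Rightarrow> 'k) set). dP obj Hom ud (Suc n) m b = c)))"

definition obj_D :: "nat \<Rightarrow> nat set" where "obj_D n = {0..n}"

definition Hom_D :: "nat \<Rightarrow> nat \<Rightarrow> (nat \<Rightarrow> nat) set" where
  "Hom_D n m = {\<phi> \<in> PiE {0..n} (\<lambda>_. {0..m}). strict_mono_on {0..n} \<phi>}"

definition coface_D :: "nat \<Rightarrow> nat \<Rightarrow> (nat \<Rightarrow> nat)" where
  "coface_D n i = (\<lambda>j\<in>{0..n - 1}. if j < i then j else j + 1)"

definition ud_D :: "nat \<Rightarrow> (nat \<Rightarrow> nat) \<Rightarrow> 'k::field" where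
  "ud_D n \<theta> = (\<Sum>i\<in>{0..n}. if \<theta> = coface_D n i then (-1) ^ i else 0)"

definition obj_S :: "nat \<Rightarrow> bool list set" where "obj_S n = {x. length x = n}"

text \<open>coface delta_i^e : square_{n-1} -> square_n inserting e as i-th coordinate (1 <= i <= n)\<close>
definition coface_S :: "nat \<Rightarrow> nat \<Rightarrow> bool \<Rightarrow> (bool list \<Rightarrow> bool list)" where
  "coface_S n i e = (\<lambda>x\<in>obj_S (n - 1). take (i - 1) x @ e # drop (i - 1) x)"

inductive sq_mor :: "nat \<Rightarrow> nat \<Rightarrow> (bool list \<Rightarrow> bool list) \<Rightarrow> bool" where
  sq_id: "sq_mor n n (\<lambda>x\<in>obj_S n. x)"
| sq_step: "sq_mor n m \<phi> \<Longrightarrow> 1 \<le> i \<Longrightarrow> i \<le> Suc m \<Longrightarrow>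
            sq_mor n (Suc m) (compose (obj_S n) (coface_S (Suc m) i e) \<phi>)"

definition Hom_S :: "nat \<Rightarrow> nat \<Rightarrow> (bool list \<Rightarrow> bool list) set" where
  "Hom_S n m = {\<phi>. sq_mor n m \<phi>}"

definition ud_S :: "nat \<Rightarrow> (bool list \<Rightarrow> bool list) \<Rightarrow> 'k::field" where
  "ud_S n \<theta> = (\<Sum>i\<in>{1..n}. (-1) ^ (i - 1) *
      ((if \<theta> = coface_S n i True then 1 else 0) - (if \<theta> = coface_S n i False then 1 else 0)))"

end

theory Submission
  imports Defs "HOL-Library.Function_Algebras"
begin

definition ind :: "'b \<Rightarrow> 'b \<Rightarrow> 'k::comm_ring_1" where
  "ind \<phi> = (\<lambda>\<psi>. of_bool (\<psi> = \<phi>))"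

definition vsum :: "'i set \<Rightarrow> ('i \<Rightarrow> 'k) \<Rightarrow> ('i \<Rightarrow> 'b \<Rightarrow> 'k::comm_ring_1) \<Rightarrow> 'b \<Rightarrow> 'k" where
  "vsum A a V = (\<lambda>x. \<Sum>s\<in>A. a s * V s x)"

lemma ker_vsum:
  "(\<lambda>x. \<Sum>y\<in>B. K x y * vsum A a V y) = vsum A a (\<lambda>s x. \<Sum>y\<in>B. K x y * V s y)"
  unfolding vsum_def
  by (simp add: sum_distrib_left sum.swap[of _ B] mult.left_commute)

lemma ker_ind:
  assumes "finite B" "y0 \<in> B"
  shows "(\<lambda>x. \<Sum>y\<in>B. K x y * ind y0 y) = (\<lambda>x. K x y0)"
  using assms by (auto simp: ind_def of_bool_def if_distrib cong: if_cong)

lemma ker_add: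
  fixes K :: "'x \<Rightarrow> 'y \<Rightarrow> 'k::comm_ring_1"
  shows "(\<lambda>x. \<Sum>y\<in>B. K x y * (c y + d y)) = (\<lambda>x. (\<Sum>y\<in>B. K x y * c y) + (\<Sum>y\<in>B. K x y * d y))"
  by (rule ext) (simp add: algebra_simps sum.distrib)

lemma ker_scale:
  fixes K :: "'x \<Rightarrow> 'y \<Rightarrow> 'k::comm_ring_1"
  shows "(\<lambda>x. \<Sum>y\<in>B. K x y * (a * c y)) = (\<lambda>x. a * (\<Sum>y\<in>B. K x y * c y))"
  by (rule ext) (simp add: algebra_simps sum_distrib_left)

lemma actP_ker: "actP obj Hom n p q \<alpha> c = (\<lambda>\<chi>. \<Sum>\<phi>\<in>Hom n p. of_bool (compose (obj n) \<alpha> \<phi> = \<chi>) * c \<phi>)"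
  unfolding actP_def by (auto intro!: ext sum.cong)

lemma dP_ker: "dP obj Hom ud n m c = (\<lambda>\<psi>. \<Sum>\<phi>\<in>Hom n m.
     (\<Sum>\<theta>\<in>Hom (n - 1) n. of_bool (compose (obj (n - 1)) \<phi> \<theta> = \<psi>) * ud n \<theta>) * c \<phi>)"
  unfolding dP_def by (auto intro!: ext sum.cong simp: sum_distrib_right sum_distrib_left of_bool_def)

lemma aug_ker: "aug Hom m c = (\<Sum>\<phi>\<in>Hom 0 m. 1 * c \<phi>)"
  unfolding aug_def by simp

lemma vsum_apply: "vsum A a V x = (\<Sum>s\<in>A. a s * V s x)"
  by (simp add: vsum_def)

lemma vsum_cong: "(\<And>s. s \<in> A \<Longrightarrow> V s = W s) \<Longrightarrow> vsum A a V = vsum A a W"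
  unfolding vsum_def by (auto intro!: ext sum.cong)

lemma vsum_cong_simp[cong]: "A = B \<Longrightarrow> a = b \<Longrightarrow> (\<And>s. s \<in> B =simp=> V s = W s) \<Longrightarrow> vsum A a V = vsum B b W"
  unfolding vsum_def simp_implies_def by (auto intro!: ext sum.cong)

lemma vsum_add: "vsum A a V + vsum A a W = vsum A a (\<lambda>s. V s + W s)"
  unfolding vsum_def by (auto intro!: ext simp: sum.distrib algebra_simps)

lemma vsum_diff: "vsum A a V - vsum A a W = vsum A a (\<lambda>s. V s - W s)"
  unfolding vsum_def by (auto intro!: ext simp: sum_subtractf algebra_simps)

lemma sub_sum:
  assumes "ksubspace S" "finite A" "\<forall>s\<in>A. V s \<in> S"
  shows "vsum A a V \<in> S"
  using assms(2,3)
proof (induction A rule: finite_induct)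
  case empty
  then show ?case using assms(1) by (simp add: vsum_def ksubspace_def vzero_def)
next
  case (insert x F)
  have "vsum (insert x F) a V = vadd (vscale (a x) (V x)) (vsum F a V)"
    using insert by (auto simp: vsum_def vadd_def vscale_def intro!: ext)
  then show ?case using insert assms(1) unfolding ksubspace_def by auto
qed

lemma lin_sum:
  assumes "klinear S F" "ksubspace S" "finite A" "\<forall>s\<in>A. V s \<in> S"
  shows "F (vsum A a V) = vsum A a (\<lambda>s. F (V s))"
  using assms(3,4)
proof (induction A rule: finite_induct)
  case empty
  have "vzero \<in> S" using assms(2) by (simp add: ksubspace_def)
  then have "F (vscale 0 vzero) = vscale 0 (F vzero)" using assms(1) by (simp add: klinear_def)
  moreover have "vscale 0 (vzero::'a \<Rightarrow> 'b) = vzero" "vscale 0 (F vzero) = vzero"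
    by (auto simp: vscale_def vzero_def)
  ultimately show ?case by (simp add: vsum_def vzero_def)
next
  case (insert x A)
  have e: "vsum (insert x A) a V = vadd (vscale (a x) (V x)) (vsum A a V)"
    using insert by (auto simp: vsum_def vadd_def vscale_def intro!: ext)
  have m: "vsum A a V \<in> S" using sub_sum[OF assms(2)] insert by auto
  have "F (vsum (insert x A) a V) = vadd (vscale (a x) (F (V x))) (F (vsum A a V))"
    unfolding e using assms(1,2) insert m unfolding klinear_def ksubspace_def by auto
  then show ?case using insert by (auto simp: vsum_def vadd_def vscale_def intro!: ext)
qed


lemma pair_cancel:
  fixes f :: "nat \<Rightarrow> nat \<Rightarrow> 'g::ab_group_add"
  assumes "\<And>i j. a \<le> i \<Longrightarrow> i \<le> j \<Longrightarrow> j \<le> N \<Longrightarrow> f i j = - f (Suc j) i"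
  shows "(\<Sum>i=a..Suc N. \<Sum>j=a..N. f i j) = 0"
  using assms
proof (induction N)
  case 0
  then show ?case by (cases "a = 0") (auto simp: sum.cl_ivl_Suc)
next
  case (Suc N)
  show ?case
  proof (cases "Suc N < a")
    case True
    then show ?thesis by simp
  next
    case False
    have IH: "(\<Sum>i=a..Suc N. \<Sum>j=a..N. f i j) = 0" using Suc by auto
    have "(\<Sum>i=a..Suc (Suc N). \<Sum>j=a..Suc N. f i j)
        = (\<Sum>i=a..Suc (Suc N). (\<Sum>j=a..N. f i j) + f i (Suc N))"
      using False by (intro sum.cong) (auto simp: sum.cl_ivl_Suc)
    also have "\<dots> = (\<Sum>i=a..Suc (Suc N). \<Sum>j=a..N. f i j) + (\<Sum>i=a..Suc (Suc N). f i (Suc N))"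
      by (simp add: sum.distrib)
    also have "(\<Sum>i=a..Suc (Suc N). \<Sum>j=a..N. f i j) = (\<Sum>i=a..Suc N. \<Sum>j=a..N. f i j) + (\<Sum>j=a..N. f (Suc (Suc N)) j)"
      using False by (simp add: sum.cl_ivl_Suc)
    also have "(\<Sum>i=a..Suc (Suc N). f i (Suc N)) = (\<Sum>i=a..Suc N. f i (Suc N)) + f (Suc (Suc N)) (Suc N)"
      using False by (simp add: sum.cl_ivl_Suc)
    finally have "(\<Sum>i=a..Suc (Suc N). \<Sum>j=a..Suc N. f i j) =
        (\<Sum>i=a..Suc N. f i (Suc N)) + ((\<Sum>j=a..N. f (Suc (Suc N)) j) + f (Suc (Suc N)) (Suc N))"
      using IH by (simp add: algebra_simps)
    also have "(\<Sum>j=a..N. f (Suc (Suc N)) j) + f (Suc (Suc N)) (Suc N) = (\<Sum>j=a..Suc N. f (Suc (Suc N)) j)"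
      using False by (simp add: sum.cl_ivl_Suc)
    also have "(\<Sum>i=a..Suc N. f i (Suc N)) + \<dots> = (\<Sum>i=a..Suc N. f i (Suc N) + f (Suc (Suc N)) i)"
      by (simp add: sum.distrib)
    also have "\<dots> = 0" using Suc.prems by (intro sum.neutral) auto
    finally show ?thesis .
  qed
qed

locale cat0 =
  fixes obj :: "nat \<Rightarrow> 'a set" and Hom :: "nat \<Rightarrow> nat \<Rightarrow> ('a \<Rightarrow> 'a) set"
  assumes fin: "finite (Hom n m)"
    and hom_pi: "\<phi> \<in> Hom n m \<Longrightarrow> \<phi> \<in> PiE (obj n) (\<lambda>_. obj m)"
    and hom_id: "(\<lambda>x\<in>obj n. x) \<in> Hom n n"
    and hom_comp: "\<phi> \<in> Hom n m \<Longrightarrow> \<psi> \<in> Hom m p \<Longrightarrow> compose (obj n) \<psi> \<phi> \<in> Hom n p"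
begin

lemma pmod_iff: "c \<in> Pmod Hom n m \<longleftrightarrow> (\<forall>\<phi>. c \<phi> \<noteq> 0 \<longrightarrow> \<phi> \<in> Hom n m)"
  unfolding Pmod_def using finite_subset[of "{\<phi>. c \<phi> \<noteq> 0}" "Hom n m"] fin[of n m] by auto

lemma expand: "c \<in> Pmod Hom n m \<Longrightarrow> vsum (Hom n m) c ind = c"
  unfolding pmod_iff vsum_def ind_def
  by (rule ext) (auto simp: of_bool_def fin if_distrib cong: if_cong)

lemma ind_mem: "\<phi> \<in> Hom n m \<Longrightarrow> ind \<phi> \<in> Pmod Hom n m"
  unfolding pmod_iff ind_def by auto

lemma vsum_mem: "finite A \<Longrightarrow> (\<forall>s\<in>A. V s \<in> Pmod Hom n m) \<Longrightarrow> vsum A a V \<in> Pmod Hom n m"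
  unfolding pmod_iff vsum_def
  by (metis (mono_tags, lifting) mult_zero_right sum.neutral)

lemma actP_vsum: "actP obj Hom n p q \<alpha> (vsum A a V) = vsum A a (\<lambda>s. actP obj Hom n p q \<alpha> (V s))"
  by (simp add: actP_ker ker_vsum)

lemma dP_vsum: "dP obj Hom ud n m (vsum A a V) = vsum A a (\<lambda>s. dP obj Hom ud n m (V s))"
  by (simp add: dP_ker ker_vsum)

lemma aug_vsum: "aug Hom m (vsum A a V) = (\<Sum>s\<in>A. a s * aug Hom m (V s))"
  unfolding aug_def vsum_def by (simp add: sum.swap[of _ A] sum_distrib_left)

lemma actP_ind: "\<beta> \<in> Hom n p \<Longrightarrow> actP obj Hom n p q \<alpha> (ind \<beta>) = ind (compose (obj n) \<alpha> \<beta>)"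
  unfolding actP_ker by (subst ker_ind) (auto simp: fin ind_def intro!: ext)

lemma dP_ind: "\<phi> \<in> Hom n m \<Longrightarrow> dP obj Hom ud n m (ind \<phi>)
     = vsum (Hom (n - 1) n) (ud n) (\<lambda>\<theta>. ind (compose (obj (n - 1)) \<phi> \<theta>))"
  unfolding dP_ker by (subst ker_ind) (auto simp: fin ind_def vsum_def mult.commute intro!: ext sum.cong)

lemma aug_ind: "\<phi> \<in> Hom 0 m \<Longrightarrow> aug Hom m (ind \<phi>) = 1"
  by (simp add: aug_def ind_def fin)

lemma comp_id_left: "\<phi> \<in> Hom n m \<Longrightarrow> compose (obj n) (\<lambda>x\<in>obj m. x) \<phi> = \<phi>"
  using hom_pi by (intro Id_compose) (auto simp: PiE_def)

lemma comp_id_right: "\<phi> \<in> Hom n m \<Longrightarrow> compose (obj n) \<phi> (\<lambda>x\<in>obj n. x) = \<phi>"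
  using hom_pi by (intro compose_Id) (auto simp: PiE_def)

lemma comp_assoc: "\<phi> \<in> Hom n m \<Longrightarrow>
   compose (obj n) (compose (obj m) \<psi>' \<psi>) \<phi> = compose (obj n) \<psi>' (compose (obj n) \<psi> \<phi>)"
  using hom_pi by (intro compose_assoc[symmetric]) (auto simp: PiE_def)


end

locale augcat = cat0 obj Hom for obj :: "nat \<Rightarrow> 'a set" and Hom :: "nat \<Rightarrow> nat \<Rightarrow> ('a \<Rightarrow> 'a) set" +
  fixes ud :: "nat \<Rightarrow> ('a \<Rightarrow> 'a) \<Rightarrow> 'k::field"
    and Hb :: "nat \<Rightarrow> nat \<Rightarrow> ('a \<Rightarrow> 'a) \<Rightarrow> ('a \<Rightarrow> 'a) \<Rightarrow> 'k"
    and z :: "nat \<Rightarrow> 'a \<Rightarrow> 'a"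
  assumes hom_z: "z m \<in> Hom 0 m"
    and dd: "1 \<le> n \<Longrightarrow> (\<Sum>\<theta>\<in>Hom n (Suc n). \<Sum>\<theta>'\<in>Hom (n - 1) n.
               ud (Suc n) \<theta> * ud n \<theta>' * F (compose (obj (n - 1)) \<theta> \<theta>')) = 0"
    and aug_d: "(\<Sum>\<theta>\<in>Hom 0 1. ud 1 \<theta>) = 0"
    and Hb_mem: "\<phi> \<in> Hom n m \<Longrightarrow> Hb n m \<phi> \<in> Pmod Hom (Suc n) m"
    and Hb_pos: "1 \<le> n \<Longrightarrow> \<phi> \<in> Hom n m \<Longrightarrow> dP obj Hom ud (Suc n) m (Hb n m \<phi>)
         + vsum (Hom (n - 1) n) (ud n) (\<lambda>\<theta>. Hb (n - 1) m (compose (obj (n - 1)) \<phi> \<theta>)) = ind \<phi>"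
    and Hb_0: "\<phi> \<in> Hom 0 m \<Longrightarrow> dP obj Hom ud 1 m (Hb 0 m \<phi>) = ind \<phi> - ind (z m)"
begin

definition hop :: "nat \<Rightarrow> nat \<Rightarrow> (('a \<Rightarrow> 'a) \<Rightarrow> 'k) \<Rightarrow> ('a \<Rightarrow> 'a) \<Rightarrow> 'k" where
  "hop n m c = (\<lambda>\<chi>. \<Sum>\<phi>\<in>Hom n m. Hb n m \<phi> \<chi> * c \<phi>)"

lemma hop_vsum_def: "hop n m c = vsum (Hom n m) c (Hb n m)"
  unfolding hop_def vsum_def by (auto intro!: ext simp: mult.commute)

lemma hop_vsum: "hop n m (vsum A a V) = vsum A a (\<lambda>s. hop n m (V s))"
  by (simp add: hop_def ker_vsum)

lemma hop_ind: "\<phi> \<in> Hom n m \<Longrightarrow> hop n m (ind \<phi>) = Hb n m \<phi>"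
  unfolding hop_def by (subst ker_ind) (auto simp: fin)

lemma actP_basis: "c \<in> Pmod Hom r p \<Longrightarrow>
   actP obj Hom r p q \<alpha> c = vsum (Hom r p) c (\<lambda>\<beta>. ind (compose (obj r) \<alpha> \<beta>))"
proof -
  assume c: "c \<in> Pmod Hom r p"
  have "actP obj Hom r p q \<alpha> c = actP obj Hom r p q \<alpha> (vsum (Hom r p) c ind)"
    using expand[OF c] by simp
  also have "\<dots> = vsum (Hom r p) c (\<lambda>\<beta>. ind (compose (obj r) \<alpha> \<beta>))"
    by (simp only: actP_vsum, rule vsum_cong, simp add: actP_ind)
  finally show ?thesis .
qed

lemma dP_basis: "c \<in> Pmod Hom n m \<Longrightarrow>
   dP obj Hom ud n m c = vsum (Hom n m) c (\<lambda>\<phi>. dP obj Hom ud n m (ind \<phi>))"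
proof -
  assume c: "c \<in> Pmod Hom n m"
  have "dP obj Hom ud n m c = dP obj Hom ud n m (vsum (Hom n m) c ind)"
    using expand[OF c] by simp
  then show ?thesis by (simp only: dP_vsum)
qed

lemma aug_basis: "c \<in> Pmod Hom 0 m \<Longrightarrow> aug Hom m c = (\<Sum>\<phi>\<in>Hom 0 m. c \<phi>)"
  by (simp add: aug_def)

lemma act_mem: "\<alpha> \<in> Hom p q \<Longrightarrow> c \<in> Pmod Hom r p \<Longrightarrow> actP obj Hom r p q \<alpha> c \<in> Pmod Hom r q"
  by (simp add: actP_basis vsum_mem fin ind_mem hom_comp)

lemma act_lin: "klinear (Pmod Hom r p) (actP obj Hom r p q \<alpha>)"
  unfolding klinear_def vadd_def vscale_def actP_ker by (simp add: ker_add ker_scale)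

lemma act_id: "c \<in> Pmod Hom r p \<Longrightarrow> actP obj Hom r p p (\<lambda>x\<in>obj p. x) c = c"
  by (simp add: actP_basis comp_id_left expand)

lemma act_comp: "\<alpha> \<in> Hom p q \<Longrightarrow> \<beta> \<in> Hom q s \<Longrightarrow> c \<in> Pmod Hom r p \<Longrightarrow>
   actP obj Hom r p s (compose (obj p) \<beta> \<alpha>) c = actP obj Hom r q s \<beta> (actP obj Hom r p q \<alpha> c)"
proof -
  assume a: "\<alpha> \<in> Hom p q" and b: "\<beta> \<in> Hom q s" and c: "c \<in> Pmod Hom r p"
  have "actP obj Hom r q s \<beta> (actP obj Hom r p q \<alpha> c)
      = vsum (Hom r p) c (\<lambda>\<phi>. actP obj Hom r q s \<beta> (ind (compose (obj r) \<alpha> \<phi>)))"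
    using c by (simp add: actP_basis actP_vsum)
  also have "\<dots> = vsum (Hom r p) c (\<lambda>\<phi>. ind (compose (obj r) (compose (obj p) \<beta> \<alpha>) \<phi>))"
    using a by (intro vsum_cong) (simp add: actP_ind hom_comp comp_assoc)
  finally show ?thesis using c by (simp add: actP_basis)
qed

lemma P_lmod: "lmod obj Hom (Pmod Hom r) (actP obj Hom r)"
proof -
  have "ksubspace (Pmod Hom r m)" for m
    unfolding ksubspace_def vzero_def vadd_def vscale_def
    by (auto simp: pmod_iff) (metis add.right_neutral add_0)
  then show ?thesis unfolding lmod_def
    using act_mem act_lin act_id act_comp hom_id by blast
qed


lemma dP_mem: "c \<in> Pmod Hom n m \<Longrightarrow> dP obj Hom ud n m c \<in> Pmod Hom (n - 1) m"
  by (simp only: dP_basis) (simp add: dP_ind vsum_mem fin ind_mem hom_comp)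

lemma dP_lin: "klinear (Pmod Hom n m) (dP obj Hom ud n m)"
  unfolding klinear_def vadd_def vscale_def dP_ker by (simp add: ker_add ker_scale)

lemma dP_nat: "\<alpha> \<in> Hom p q \<Longrightarrow> c \<in> Pmod Hom n p \<Longrightarrow>
   dP obj Hom ud n q (actP obj Hom n p q \<alpha> c) = actP obj Hom (n - 1) p q \<alpha> (dP obj Hom ud n p c)"
proof -
  assume a: "\<alpha> \<in> Hom p q" and c: "c \<in> Pmod Hom n p"
  have "dP obj Hom ud n q (actP obj Hom n p q \<alpha> c) = vsum (Hom n p) c (\<lambda>\<beta>.
      vsum (Hom (n - 1) n) (ud n) (\<lambda>\<theta>. ind (compose (obj (n - 1)) (compose (obj n) \<alpha> \<beta>) \<theta>)))"
    using c a by (simp add: actP_basis dP_vsum dP_ind hom_comp)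
  also have "\<dots> = vsum (Hom n p) c (\<lambda>\<beta>.
      vsum (Hom (n - 1) n) (ud n) (\<lambda>\<theta>. actP obj Hom (n - 1) p q \<alpha> (ind (compose (obj (n - 1)) \<beta> \<theta>))))"
    by (intro vsum_cong) (simp add: actP_ind hom_comp comp_assoc)
  also have "\<dots> = actP obj Hom (n - 1) p q \<alpha> (dP obj Hom ud n p c)"
    by (simp only: dP_basis[OF c]) (simp add: dP_ind actP_vsum)
  finally show ?thesis .
qed

lemma dP_hom: "lmod_hom Hom (Pmod Hom n) (actP obj Hom n) (Pmod Hom (n - 1)) (actP obj Hom (n - 1)) (dP obj Hom ud n)"
  unfolding lmod_hom_def using dP_mem dP_lin dP_nat by blast

lemma aug_lin: "klinear (Pmod Hom 0 m) (\<lambda>c (_::unit). aug Hom m c)"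
  unfolding klinear_def vadd_def vscale_def aug_def by (simp add: sum.distrib sum_distrib_left)

lemma aug_nat: "\<alpha> \<in> Hom p q \<Longrightarrow> c \<in> Pmod Hom 0 p \<Longrightarrow> aug Hom q (actP obj Hom 0 p q \<alpha> c) = aug Hom p c"
  by (simp add: actP_basis aug_vsum aug_ind hom_comp) (simp add: aug_def)

lemma aug_surj: "\<exists>c\<in>Pmod Hom 0 m. aug Hom m c = (a::'k)"
proof
  show "(\<lambda>\<phi>. a * ind (z m) \<phi>) \<in> Pmod Hom 0 m" by (auto simp: pmod_iff ind_def hom_z)
  show "aug Hom m (\<lambda>\<phi>. a * ind (z m) \<phi>) = a"
  proof -
    have "aug Hom m (ind (z m) :: _ \<Rightarrow> 'k) = 1" by (rule aug_ind[OF hom_z])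
    then show ?thesis unfolding aug_def sum_distrib_left[symmetric] by (simp add: aug_def)
  qed
qed

lemma Hb_0': "\<phi> \<in> Hom 0 m \<Longrightarrow> dP obj Hom ud (Suc 0) m (Hb 0 m \<phi>) = ind \<phi> - ind (z m)"
  using Hb_0 by simp

lemma hop_mem: "hop n m c \<in> Pmod Hom (Suc n) m"
  by (simp add: hop_vsum_def vsum_mem fin Hb_mem)

lemma exact0: "c \<in> Pmod Hom 0 m \<Longrightarrow> aug Hom m c = 0 \<longleftrightarrow> (\<exists>b\<in>Pmod Hom 1 m. dP obj Hom ud 1 m b = c)"
proof
  assume c: "c \<in> Pmod Hom 0 m" and a: "aug Hom m c = 0"
  have "dP obj Hom ud 1 m (hop 0 m c) = vsum (Hom 0 m) c (\<lambda>\<phi>. ind \<phi> - ind (z m))"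
    by (simp add: hop_vsum_def dP_vsum Hb_0')
  also have "\<dots> = vsum (Hom 0 m) c ind - vsum (Hom 0 m) c (\<lambda>_. ind (z m))"
    by (simp add: vsum_diff)
  also have "vsum (Hom 0 m) c (\<lambda>_. ind (z m)) = (\<lambda>x. aug Hom m c * ind (z m) x)"
    by (simp add: vsum_def aug_def sum_distrib_right)
  finally have "dP obj Hom ud 1 m (hop 0 m c) = c"
    using a expand[OF c] by (simp add: zero_fun_def[symmetric])
  then show "\<exists>b\<in>Pmod Hom 1 m. dP obj Hom ud 1 m b = c" using hop_mem[of 0 m c] by auto
next
  assume "\<exists>b\<in>Pmod Hom 1 m. dP obj Hom ud 1 m b = c"
  then obtain b where b: "b \<in> Pmod Hom 1 m" and e: "dP obj Hom ud 1 m b = c" by auto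
  have "aug Hom m (dP obj Hom ud 1 m (ind \<phi>)) = 0" if "\<phi> \<in> Hom 1 m" for \<phi>
  proof -
    have "aug Hom m (dP obj Hom ud 1 m (ind \<phi>)) = (\<Sum>\<theta>\<in>Hom 0 1. ud 1 \<theta>)"
      using that by (simp add: dP_ind aug_vsum aug_ind hom_comp)
    then show ?thesis using aug_d by simp
  qed
  then show "aug Hom m c = 0" unfolding e[symmetric] dP_basis[OF b] by (simp add: aug_vsum)
qed

lemma homotopy: "1 \<le> n \<Longrightarrow> c \<in> Pmod Hom n m \<Longrightarrow>
  dP obj Hom ud (Suc n) m (hop n m c) + hop (n - 1) m (dP obj Hom ud n m c) = c"
proof -
  assume n: "1 \<le> n" and c: "c \<in> Pmod Hom n m"
  have 1: "dP obj Hom ud (Suc n) m (hop n m c) = vsum (Hom n m) c (\<lambda>\<phi>. dP obj Hom ud (Suc n) m (Hb n m \<phi>))"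
    by (simp add: hop_vsum_def dP_vsum)
  have 2: "hop (n - 1) m (dP obj Hom ud n m c) = vsum (Hom n m) c (\<lambda>\<phi>.
     vsum (Hom (n - 1) n) (ud n) (\<lambda>\<theta>. Hb (n - 1) m (compose (obj (n - 1)) \<phi> \<theta>)))"
    by (simp only: dP_basis[OF c]) (simp add: hop_vsum dP_ind hop_ind hom_comp)
  show ?thesis unfolding 1 2 vsum_add using Hb_pos[OF n] expand[OF c]
    by (simp)
qed

lemma dd_zero: "1 \<le> n \<Longrightarrow> \<phi> \<in> Hom (Suc n) m \<Longrightarrow>
   dP obj Hom ud n m (dP obj Hom ud (Suc n) m (ind \<phi>)) = (\<lambda>_. 0)"
proof
  fix \<psi>
  assume n: "1 \<le> n" and p: "\<phi> \<in> Hom (Suc n) m"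
  have E: "dP obj Hom ud n m (dP obj Hom ud (Suc n) m (ind \<phi>)) = vsum (Hom n (Suc n)) (ud (Suc n))
     (\<lambda>\<theta>. vsum (Hom (n - 1) n) (ud n) (\<lambda>\<theta>'. ind (compose (obj (n - 1)) \<phi> (compose (obj (n - 1)) \<theta> \<theta>'))))"
  proof -
    have e1: "dP obj Hom ud (Suc n) m (ind \<phi>) = vsum (Hom n (Suc n)) (ud (Suc n)) (\<lambda>\<theta>. ind (compose (obj n) \<phi> \<theta>))"
      using dP_ind[OF p] by simp
    have e2: "dP obj Hom ud n m (ind (compose (obj n) \<phi> \<theta>)) = vsum (Hom (n - 1) n) (ud n)
       (\<lambda>\<theta>'. ind (compose (obj (n - 1)) \<phi> (compose (obj (n - 1)) \<theta> \<theta>')))"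
      if t: "\<theta> \<in> Hom n (Suc n)" for \<theta>
    proof -
      have "dP obj Hom ud n m (ind (compose (obj n) \<phi> \<theta>)) = vsum (Hom (n - 1) n) (ud n)
       (\<lambda>\<theta>'. ind (compose (obj (n - 1)) (compose (obj n) \<phi> \<theta>) \<theta>'))"
        by (rule dP_ind[OF hom_comp[OF t p]])
      also have "\<dots> = vsum (Hom (n - 1) n) (ud n)
       (\<lambda>\<theta>'. ind (compose (obj (n - 1)) \<phi> (compose (obj (n - 1)) \<theta> \<theta>')))"
        by (rule vsum_cong, rule arg_cong[where f=ind], erule comp_assoc)
      finally show ?thesis .
    qed
    show ?thesis unfolding e1 dP_vsum using e2 by (intro vsum_cong) auto
  qed
  have "dP obj Hom ud n m (dP obj Hom ud (Suc n) m (ind \<phi>)) \<psi> = (\<Sum>\<theta>\<in>Hom n (Suc n). \<Sum>\<theta>'\<in>Hom (n - 1) n.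
       ud (Suc n) \<theta> * ud n \<theta>' * (\<lambda>\<chi>. ind (compose (obj (n - 1)) \<phi> \<chi>) \<psi>) (compose (obj (n - 1)) \<theta> \<theta>'))"
    unfolding E by (simp only: vsum_def sum_distrib_left mult.assoc)
  also have "\<dots> = 0" by (rule dd[OF n])
  finally show "dP obj Hom ud n m (dP obj Hom ud (Suc n) m (ind \<phi>)) \<psi> = 0" .
qed

lemma exactn: "1 \<le> n \<Longrightarrow> c \<in> Pmod Hom n m \<Longrightarrow>
   dP obj Hom ud n m c = (\<lambda>_. 0) \<longleftrightarrow> (\<exists>b\<in>Pmod Hom (Suc n) m. dP obj Hom ud (Suc n) m b = c)"
proof
  assume n: "1 \<le> n" and c: "c \<in> Pmod Hom n m" and d: "dP obj Hom ud n m c = (\<lambda>_. 0)"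
  have "hop (n - 1) m (\<lambda>_. 0) = 0" by (simp add: hop_def zero_fun_def)
  then have "dP obj Hom ud (Suc n) m (hop n m c) = c" using homotopy[OF n c] d by simp
  then show "\<exists>b\<in>Pmod Hom (Suc n) m. dP obj Hom ud (Suc n) m b = c" using hop_mem by blast
next
  assume n: "1 \<le> n" and "\<exists>b\<in>Pmod Hom (Suc n) m. dP obj Hom ud (Suc n) m b = c"
  then obtain b where b: "b \<in> Pmod Hom (Suc n) m" and e: "dP obj Hom ud (Suc n) m b = c" by auto
  have "dP obj Hom ud n m c = vsum (Hom (Suc n) m) b (\<lambda>\<phi>. dP obj Hom ud n m (dP obj Hom ud (Suc n) m (ind \<phi>)))"
    unfolding e[symmetric] dP_basis[OF b] by (simp add: dP_vsum)
  also have "\<dots> = vsum (Hom (Suc n) m) b (\<lambda>_ _. 0)"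
    using dd_zero[OF n] by (intro vsum_cong) auto
  finally show "dP obj Hom ud n m c = (\<lambda>_. 0)" by (simp add: vsum_def)
qed


lemma P_sub: "ksubspace (Pmod Hom r m)"
  using P_lmod[of r] unfolding lmod_def by blast

lemma P_proj: "projective_lmod TYPE('x) TYPE('y) obj Hom (Pmod Hom r :: nat \<Rightarrow> (('a \<Rightarrow> 'a) \<Rightarrow> 'k) set) (actP obj Hom r)"
  unfolding projective_lmod_def
proof (intro allI impI)
  fix M :: "nat \<Rightarrow> ('x \<Rightarrow> 'k) set" and actM and N :: "nat \<Rightarrow> ('y \<Rightarrow> 'k) set" and actN f g
  assume H: "lmod obj Hom M actM \<and> lmod obj Hom N actN \<and> lmod_hom Hom M actM N actN f \<and>
        (\<forall>m. f m ` M m = N m) \<and> lmod_hom Hom (Pmod Hom r) (actP obj Hom r) N actN g"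
  have LM: "lmod obj Hom M actM" using H by simp
  have Hf: "lmod_hom Hom M actM N actN f" using H by simp
  have Hg: "lmod_hom Hom (Pmod Hom r) (actP obj Hom r) N actN g" using H by simp
  have subM: "ksubspace (M m)" for m using LM unfolding lmod_def by simp
  have actM_mem: "actM n m \<phi> w \<in> M m" if "\<phi> \<in> Hom n m" "w \<in> M n" for n m \<phi> w
    using LM that unfolding lmod_def by blast
  have actM_lin: "klinear (M n) (actM n m \<phi>)" if "\<phi> \<in> Hom n m" for n m \<phi>
    using LM that unfolding lmod_def by blast
  have actM_comp: "actM n p (compose (obj n) \<psi> \<phi>) w = actM m p \<psi> (actM n m \<phi> w)"
    if "\<phi> \<in> Hom n m" "\<psi> \<in> Hom m p" "w \<in> M n" for n m p \<phi> \<psi> w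
    using LM that unfolding lmod_def by blast
  have f_lin: "klinear (M m) (f m)" for m using Hf Hg unfolding lmod_hom_def by blast
  have f_nat: "f m (actM n m \<phi> w) = actN n m \<phi> (f n w)" if "\<phi> \<in> Hom n m" "w \<in> M n" for n m \<phi> w
    using Hf Hg that unfolding lmod_hom_def by blast
  have g_lin: "klinear (Pmod Hom r m) (g m)" for m using Hf Hg unfolding lmod_hom_def by blast
  have g_nat: "g m (actP obj Hom r n m \<phi> c) = actN n m \<phi> (g n c)" if "\<phi> \<in> Hom n m" "c \<in> Pmod Hom r n" for n m \<phi> c
    using Hf Hg that unfolding lmod_hom_def by blast
  have g_mem: "g m c \<in> N m" if "c \<in> Pmod Hom r m" for m c
    using Hf Hg that unfolding lmod_hom_def by blast
  define e where "e = (ind (\<lambda>x\<in>obj r. x) :: ('a \<Rightarrow> 'a) \<Rightarrow> 'k)"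
  have e: "e \<in> Pmod Hom r r" unfolding e_def by (rule ind_mem[OF hom_id])
  have "g r e \<in> f r ` M r" using g_mem[OF e] H by auto
  then obtain v where v: "v \<in> M r" and fv: "f r v = g r e" by auto
  define h where "h = (\<lambda>m c. vsum (Hom r m) c (\<lambda>\<phi>. actM r m \<phi> v))"
  have h_mem: "h m c \<in> M m" for m c
    unfolding h_def by (rule sub_sum[OF subM fin]) (auto intro: actM_mem v)
  have h_lin: "klinear (Pmod Hom r m) (h m)" for m
    unfolding klinear_def h_def vsum_def vadd_def vscale_def
    by (auto intro!: ext simp: sum.distrib sum_distrib_left algebra_simps)
  have h_ker: "h q c = (\<lambda>x. \<Sum>\<phi>\<in>Hom r q. actM r q \<phi> v x * c \<phi>)" for q c
    unfolding h_def vsum_def by (auto intro!: ext simp: mult.commute)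
  have h_ind: "h q (ind \<psi>) = actM r q \<psi> v" if "\<psi> \<in> Hom r q" for q \<psi>
    unfolding h_ker by (subst ker_ind) (auto simp: fin that)
  have h_nat: "h q (actP obj Hom r p q \<alpha> c) = actM p q \<alpha> (h p c)"
    if a: "\<alpha> \<in> Hom p q" and c: "c \<in> Pmod Hom r p" for p q \<alpha> c
  proof -
    have "h q (actP obj Hom r p q \<alpha> c) = vsum (Hom r p) c (\<lambda>\<beta>. h q (ind (compose (obj r) \<alpha> \<beta>)))"
      unfolding actP_basis[OF c] h_ker ker_vsum by (simp add: h_ker)
    also have "\<dots> = vsum (Hom r p) c (\<lambda>\<beta>. actM p q \<alpha> (actM r p \<beta> v))"
      using a by (intro vsum_cong) (simp add: h_ind hom_comp actM_comp v)
    also have "\<dots> = actM p q \<alpha> (h p c)"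
      unfolding h_def by (rule lin_sum[OF actM_lin[OF a] subM fin, symmetric]) (auto intro: actM_mem v)
    finally show ?thesis .
  qed
  have fh: "f m (h m c) = g m c" if c: "c \<in> Pmod Hom r m" for m c
  proof -
    have "f m (h m c) = vsum (Hom r m) c (\<lambda>\<phi>. f m (actM r m \<phi> v))"
      unfolding h_def by (rule lin_sum[OF f_lin subM fin]) (auto intro: actM_mem v)
    also have "\<dots> = vsum (Hom r m) c (\<lambda>\<phi>. g m (actP obj Hom r r m \<phi> e))"
      by (intro vsum_cong) (simp add: f_nat v fv g_nat e)
    also have "\<dots> = vsum (Hom r m) c (\<lambda>\<phi>. g m (ind \<phi>))"
      by (intro vsum_cong) (simp add: e_def actP_ind hom_id comp_id_right)
    also have "\<dots> = g m (vsum (Hom r m) c ind)"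
      by (rule lin_sum[OF g_lin P_sub fin, symmetric]) (auto intro: ind_mem)
    finally show ?thesis using expand[OF c] by simp
  qed
  have "lmod_hom Hom (Pmod Hom r) (actP obj Hom r) M actM h"
    unfolding lmod_hom_def using h_mem h_lin h_nat by blast
  then show "\<exists>h. lmod_hom Hom (Pmod Hom r) (actP obj Hom r) M actM h \<and> (\<forall>m. \<forall>v\<in>Pmod Hom r m. f m (h m v) = g m v)"
    using fh by blast
qed

lemma resolution: "proj_resolution TYPE('x) TYPE('y) obj Hom ud"
  unfolding proj_resolution_def
  using P_lmod P_proj dP_hom aug_lin aug_nat aug_surj exact0 exactn by blast
end


(* Semi-simplex case *)

lemma finD: "finite (Hom_D n m)"
proof -
  have "Hom_D n m \<subseteq> PiE {0..n} (\<lambda>_. {0..m})" by (auto simp: Hom_D_def)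
  then show ?thesis by (rule finite_subset) (simp add: finite_PiE)
qed

lemma cat0_D: "cat0 obj_D Hom_D"
proof
  show "finite (Hom_D n m)" for n m by (rule finD)
  show "\<phi> \<in> Hom_D n m \<Longrightarrow> \<phi> \<in> PiE (obj_D n) (\<lambda>_. obj_D m)" for \<phi> n m
    by (simp add: Hom_D_def obj_D_def)
  show "(\<lambda>x\<in>obj_D n. x) \<in> Hom_D n n" for n
    by (auto simp: Hom_D_def obj_D_def strict_mono_on_def)
  show "compose (obj_D n) \<psi> \<phi> \<in> Hom_D n p" if "\<phi> \<in> Hom_D n m" "\<psi> \<in> Hom_D m p" for \<phi> \<psi> n m p
    using that by (auto simp: Hom_D_def obj_D_def strict_mono_on_def compose_def PiE_iff)
qed

interpretation D0: cat0 obj_D Hom_D by (rule cat0_D)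

lemma coface_in: "1 \<le> n \<Longrightarrow> i \<le> n \<Longrightarrow> coface_D n i \<in> Hom_D (n - 1) n"
  by (auto simp: Hom_D_def coface_D_def strict_mono_on_def)

lemma ud_sum:
  assumes n: "1 \<le> n"
  shows "(\<Sum>\<theta>\<in>Hom_D (n - 1) n. ud_D n \<theta> * G \<theta>) = (\<Sum>i=0..n. (-1) ^ i * G (coface_D n i) :: 'k::field)"
proof -
  have "(\<Sum>\<theta>\<in>Hom_D (n - 1) n. ud_D n \<theta> * G \<theta>)
      = (\<Sum>\<theta>\<in>Hom_D (n - 1) n. \<Sum>i=0..n. (if \<theta> = coface_D n i then (-1) ^ i * G \<theta> else 0))"
    unfolding ud_D_def sum_distrib_right by (intro sum.cong refl) auto
  also have "\<dots> = (\<Sum>i=0..n. \<Sum>\<theta>\<in>Hom_D (n - 1) n. (if \<theta> = coface_D n i then (-1) ^ i * G \<theta> else 0))"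
    by (rule sum.swap)
  also have "\<dots> = (\<Sum>i=0..n. (-1) ^ i * G (coface_D n i))"
    using coface_in[OF n] by (intro sum.cong) (auto simp: finD)
  finally show ?thesis .
qed

lemma vsum_ud: "1 \<le> n \<Longrightarrow> vsum (Hom_D (n - 1) n) (ud_D n) V = (\<lambda>x. \<Sum>i=0..n. (-1) ^ i * V (coface_D n i) x :: 'k::field)"
  unfolding vsum_def by (rule ext) (rule ud_sum)

lemma cosimp: "i \<le> j \<Longrightarrow> j \<le> n \<Longrightarrow> 1 \<le> n \<Longrightarrow>
  compose (obj_D (n - 1)) (coface_D (Suc n) i) (coface_D n j) =
  compose (obj_D (n - 1)) (coface_D (Suc n) (Suc j)) (coface_D n i)"
  by (rule ext) (auto simp: compose_def coface_D_def obj_D_def)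

lemma dd_D:
  assumes n: "1 \<le> n"
  shows "(\<Sum>\<theta>\<in>Hom_D n (Suc n). \<Sum>\<theta>'\<in>Hom_D (n - 1) n.
     ud_D (Suc n) \<theta> * ud_D n \<theta>' * F (compose (obj_D (n - 1)) \<theta> \<theta>')) = (0 :: 'k::field)"
proof -
  have "(\<Sum>\<theta>\<in>Hom_D n (Suc n). \<Sum>\<theta>'\<in>Hom_D (n - 1) n.
     ud_D (Suc n) \<theta> * ud_D n \<theta>' * F (compose (obj_D (n - 1)) \<theta> \<theta>'))
    = (\<Sum>\<theta>\<in>Hom_D (Suc n - 1) (Suc n). ud_D (Suc n) \<theta> * (\<Sum>\<theta>'\<in>Hom_D (n - 1) n.
          ud_D n \<theta>' * F (compose (obj_D (n - 1)) \<theta> \<theta>')))"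
    by (simp add: sum_distrib_left mult.assoc)
  also have "\<dots> = (\<Sum>i=0..Suc n. (-1) ^ i * (\<Sum>j=0..n. (-1) ^ j *
        F (compose (obj_D (n - 1)) (coface_D (Suc n) i) (coface_D n j))))"
  proof -
    have u: "(\<Sum>\<theta>\<in>Hom_D (Suc n - 1) (Suc n). ud_D (Suc n) \<theta> * H \<theta>) = (\<Sum>i=0..Suc n. (-1) ^ i * H (coface_D (Suc n) i) :: 'k)" for H
      by (rule ud_sum) simp
    show ?thesis by (simp only: ud_sum[OF n] u)
  qed
  also have "\<dots> = (\<Sum>i=0..Suc n. \<Sum>j=0..n. (-1) ^ i * ((-1) ^ j *
        F (compose (obj_D (n - 1)) (coface_D (Suc n) i) (coface_D n j))))"
    by (simp add: sum_distrib_left)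
  also have "\<dots> = 0"
    by (rule pair_cancel) (simp add: cosimp[OF _ _ n, simplified])
  finally show ?thesis .
qed


lemma aug_d_D: "(\<Sum>\<theta>\<in>Hom_D 0 1. ud_D 1 \<theta>) = (0::'k::field)"
  using ud_sum[of 1 "\<lambda>_. 1::'k"] by simp

definition coneD :: "nat \<Rightarrow> (nat \<Rightarrow> nat) \<Rightarrow> nat \<Rightarrow> nat" where
  "coneD n \<phi> = (\<lambda>j\<in>{0..Suc n}. if j = 0 then 0 else \<phi> (j - 1))"

definition HbD :: "nat \<Rightarrow> nat \<Rightarrow> (nat \<Rightarrow> nat) \<Rightarrow> (nat \<Rightarrow> nat) \<Rightarrow> 'k::field" where
  "HbD n m \<phi> = (if \<phi> 0 = 0 then (\<lambda>_. 0) else ind (coneD n \<phi>))"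

definition zD :: "nat \<Rightarrow> nat \<Rightarrow> nat" where "zD m = (\<lambda>x\<in>{0..0}. 0)"

lemma homD_mono: "\<phi> \<in> Hom_D n m \<Longrightarrow> i < j \<Longrightarrow> j \<le> n \<Longrightarrow> \<phi> i < \<phi> j"
  by (auto simp: Hom_D_def strict_mono_on_def)

lemma homD_ge0: "\<phi> \<in> Hom_D n m \<Longrightarrow> j \<le> n \<Longrightarrow> \<phi> 0 \<le> \<phi> j"
  using homD_mono[of \<phi> n m 0 j] by (cases "j = 0") auto

lemma cone_hom: "\<phi> \<in> Hom_D n m \<Longrightarrow> \<phi> 0 \<noteq> 0 \<Longrightarrow> coneD n \<phi> \<in> Hom_D (Suc n) m"
  unfolding Hom_D_def coneD_def
  apply (auto simp: strict_mono_on_def PiE_iff)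
  subgoal for s
    apply (cases "s - Suc 0 = 0")
     apply simp
    apply (drule spec[of _ 0], drule spec[of _ "s - Suc 0"])
    by auto
  subgoal for r s
    apply (drule spec[of _ "r - Suc 0"], drule spec[of _ "s - Suc 0"])
    by auto
  done

lemma cone_c0: "\<phi> \<in> Hom_D n m \<Longrightarrow> compose (obj_D n) (coneD n \<phi>) (coface_D (Suc n) 0) = \<phi>"
  by (rule ext) (auto simp: compose_def coneD_def coface_D_def obj_D_def Hom_D_def PiE_iff extensional_def)

lemma cone_cS: "1 \<le> n \<Longrightarrow> i \<le> n \<Longrightarrow>
  compose (obj_D n) (coneD n \<phi>) (coface_D (Suc n) (Suc i)) = coneD (n - 1) (compose (obj_D (n - 1)) \<phi> (coface_D n i))"
  by (rule ext) (auto simp: compose_def coneD_def coface_D_def obj_D_def)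

lemma cone_back: "1 \<le> n \<Longrightarrow> \<phi> \<in> Hom_D n m \<Longrightarrow> \<phi> 0 = 0 \<Longrightarrow>
  coneD (n - 1) (compose (obj_D (n - 1)) \<phi> (coface_D n 0)) = \<phi>"
  by (rule ext) (auto simp: compose_def coneD_def coface_D_def obj_D_def Hom_D_def PiE_iff extensional_def)

lemma comp_at0: "1 \<le> n \<Longrightarrow> compose (obj_D (n - 1)) \<phi> (coface_D n i) 0 = \<phi> (if i = 0 then 1 else 0)"
  by (auto simp: compose_def coface_D_def obj_D_def)

lemma cone0_c1: "compose (obj_D 0) (coneD 0 \<phi>) (coface_D 1 1) = zD m"
  by (rule ext) (auto simp: compose_def coneD_def coface_D_def obj_D_def zD_def)

lemma hom0_z: "\<phi> \<in> Hom_D 0 m \<Longrightarrow> \<phi> 0 = 0 \<Longrightarrow> \<phi> = zD m"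
  by (rule ext) (auto simp: Hom_D_def zD_def PiE_iff extensional_def)


lemma dP_zero: "dP obj Hom ud n m (\<lambda>_. 0) = (\<lambda>_. 0)"
  unfolding dP_def by (intro ext sum.neutral ballI) simp

lemma Hb_mem_D: "\<phi> \<in> Hom_D n m \<Longrightarrow> HbD n m \<phi> \<in> Pmod Hom_D (Suc n) m"
  by (auto simp: HbD_def D0.pmod_iff ind_def intro: cone_hom)

lemma Hb_pos_D:
  assumes n: "1 \<le> n" and p: "\<phi> \<in> Hom_D n m"
  shows "dP obj_D Hom_D ud_D (Suc n) m (HbD n m \<phi>) + vsum (Hom_D (n - 1) n) (ud_D n)
     (\<lambda>\<theta>. HbD (n - 1) m (compose (obj_D (n - 1)) \<phi> \<theta>)) = (ind \<phi> :: _ \<Rightarrow> 'k::field)"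
proof -
  have V: "vsum (Hom_D (n - 1) n) (ud_D n) (\<lambda>\<theta>. HbD (n - 1) m (compose (obj_D (n - 1)) \<phi> \<theta>))
     = (\<lambda>x. \<Sum>i=0..n. (-1) ^ i * HbD (n - 1) m (compose (obj_D (n - 1)) \<phi> (coface_D n i)) x :: 'k)"
    by (rule vsum_ud[OF n])
  have p01: "\<phi> 0 < \<phi> 1" using homD_mono[OF p, of 0 1] n by simp
  show ?thesis
  proof (cases "\<phi> 0 = 0")
    case True
    have "HbD n m \<phi> = (\<lambda>_. 0 :: 'k)" using True by (simp add: HbD_def)
    then have d: "dP obj_D Hom_D ud_D (Suc n) m (HbD n m \<phi>) = (\<lambda>_. 0 :: 'k)" by (simp add: dP_zero)
    have a0: "compose (obj_D (n - 1)) \<phi> (coface_D n 0) 0 \<noteq> 0"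
      using comp_at0[OF n, of \<phi> 0] p01 by simp
    have h0: "HbD (n - 1) m (compose (obj_D (n - 1)) \<phi> (coface_D n 0)) = (ind \<phi> :: _ \<Rightarrow> 'k)"
      using a0 cone_back[OF n p True] by (simp add: HbD_def)
    have hi: "HbD (n - 1) m (compose (obj_D (n - 1)) \<phi> (coface_D n i)) = (\<lambda>_. 0 :: 'k)" if "i \<ge> 1" for i
    proof -
      have "compose (obj_D (n - 1)) \<phi> (coface_D n i) 0 = 0" using comp_at0[OF n, of \<phi> i] True that by simp
      then show ?thesis by (simp add: HbD_def)
    qed
    have S: "(\<Sum>i=0..n. (-1) ^ i * HbD (n - 1) m (compose (obj_D (n - 1)) \<phi> (coface_D n i)) x :: 'k) = ind \<phi> x" for x
    proof -
      have "(\<Sum>i=0..n. (-1) ^ i * HbD (n - 1) m (compose (obj_D (n - 1)) \<phi> (coface_D n i)) x :: 'k)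
          = (-1) ^ 0 * HbD (n - 1) m (compose (obj_D (n - 1)) \<phi> (coface_D n 0)) x +
            (\<Sum>i=Suc 0..n. (-1) ^ i * HbD (n - 1) m (compose (obj_D (n - 1)) \<phi> (coface_D n i)) x)"
        by (rule sum.atLeast_Suc_atMost) simp
      also have "\<dots> = ind \<phi> x" using h0 hi by simp
      finally show ?thesis .
    qed
    show ?thesis unfolding V d using S by (auto intro!: ext)
  next
    case False
    have c: "coneD n \<phi> \<in> Hom_D (Suc n) m" by (rule cone_hom[OF p False])
    have "dP obj_D Hom_D ud_D (Suc n) m (HbD n m \<phi>) = dP obj_D Hom_D ud_D (Suc n) m (ind (coneD n \<phi>) :: _ \<Rightarrow> 'k)"
      using False by (simp add: HbD_def)
    also have "\<dots> = vsum (Hom_D n (Suc n)) (ud_D (Suc n)) (\<lambda>\<theta>. ind (compose (obj_D n) (coneD n \<phi>) \<theta>))"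
      using D0.dP_ind[OF c] by simp
    also have "\<dots> = (\<lambda>x. \<Sum>i=0..Suc n. (-1) ^ i * ind (compose (obj_D n) (coneD n \<phi>) (coface_D (Suc n) i)) x)"
      using vsum_ud[of "Suc n"] by simp
    finally have d: "dP obj_D Hom_D ud_D (Suc n) m (HbD n m \<phi>) = (\<lambda>x. \<Sum>i=0..Suc n. (-1) ^ i * ind (compose (obj_D n) (coneD n \<phi>) (coface_D (Suc n) i)) x :: 'k)" .
    have hi: "HbD (n - 1) m (compose (obj_D (n - 1)) \<phi> (coface_D n i)) = ind (coneD (n - 1) (compose (obj_D (n - 1)) \<phi> (coface_D n i)))" for i
    proof -
      have "compose (obj_D (n - 1)) \<phi> (coface_D n i) 0 \<noteq> 0" using comp_at0[OF n, of \<phi> i] p01 False by simp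
      then show ?thesis by (simp add: HbD_def)
    qed
    have S: "(\<Sum>i=0..Suc n. (-1) ^ i * ind (compose (obj_D n) (coneD n \<phi>) (coface_D (Suc n) i)) x) +
         (\<Sum>i=0..n. (-1) ^ i * ind (coneD (n - 1) (compose (obj_D (n - 1)) \<phi> (coface_D n i))) x) = (ind \<phi> x :: 'k)" for x
    proof -
      have "(\<Sum>i=0..Suc n. (-1) ^ i * ind (compose (obj_D n) (coneD n \<phi>) (coface_D (Suc n) i)) x :: 'k)
         = ind \<phi> x + (\<Sum>i=0..n. (-1) ^ Suc i * ind (coneD (n - 1) (compose (obj_D (n - 1)) \<phi> (coface_D n i))) x)"
        unfolding sum.atLeast0_atMost_Suc_shift o_def cone_c0[OF p] power_0 mult_1
        by (intro arg_cong[where f="\<lambda>s. ind \<phi> x + s"] sum.cong refl) (simp add: cone_cS[OF n])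
      then show ?thesis by (simp add: sum_negf)
    qed
    show ?thesis unfolding V d hi using S by (auto intro!: ext)
  qed
qed

lemma Hb_0_D:
  assumes p: "\<phi> \<in> Hom_D 0 m"
  shows "dP obj_D Hom_D ud_D 1 m (HbD 0 m \<phi>) = (ind \<phi> - ind (zD m) :: _ \<Rightarrow> 'k::field)"
proof (cases "\<phi> 0 = 0")
  case True
  then show ?thesis using hom0_z[OF p True] by (simp add: HbD_def dP_zero zD_def zero_fun_def)
next
  case False
  have c: "coneD 0 \<phi> \<in> Hom_D 1 m" using cone_hom[OF p False] by simp
  have "dP obj_D Hom_D ud_D 1 m (HbD 0 m \<phi>) = dP obj_D Hom_D ud_D 1 m (ind (coneD 0 \<phi>) :: _ \<Rightarrow> 'k)"
    using False by (simp add: HbD_def)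
  also have "\<dots> = vsum (Hom_D 0 1) (ud_D 1) (\<lambda>\<theta>. ind (compose (obj_D 0) (coneD 0 \<phi>) \<theta>))"
    using D0.dP_ind[OF c] by simp
  also have "\<dots> = (\<lambda>x. \<Sum>i=0..1. (-1) ^ i * ind (compose (obj_D 0) (coneD 0 \<phi>) (coface_D 1 i)) x)"
    using vsum_ud[of 1] by simp
  also have "\<dots> = ind \<phi> - ind (zD m)"
    using cone_c0[OF p] cone0_c1[of \<phi> m] by (auto intro!: ext)
  finally show ?thesis .
qed

lemma augD: "augcat obj_D Hom_D (ud_D :: nat \<Rightarrow> (nat \<Rightarrow> nat) \<Rightarrow> 'k::field) HbD zD"
  apply (rule augcat.intro[OF cat0_D], rule augcat_axioms.intro)
  subgoal by (auto simp: zD_def Hom_D_def strict_mono_on_def)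
  subgoal by (rule dd_D)
  subgoal by (rule aug_d_D)
  subgoal by (rule Hb_mem_D)
  subgoal by (rule Hb_pos_D)
  subgoal by (rule Hb_0_D)
  done

lemma resD: "proj_resolution TYPE('x) TYPE('y) obj_D Hom_D (ud_D :: nat \<Rightarrow> (nat \<Rightarrow> nat) \<Rightarrow> 'k::field)"
  by (rule augcat.resolution[OF augD])


(* Semi-cube case *)

lemma fin_objS: "finite (obj_S n)"
proof -
  have "obj_S n = {xs. set xs \<subseteq> UNIV \<and> length xs = n}" by (auto simp: obj_S_def)
  then show ?thesis using finite_lists_length_eq[of "UNIV :: bool set" n] by simp
qed

lemma coface_pi: "coface_S (Suc m) i e \<in> PiE (obj_S m) (\<lambda>_. obj_S (Suc m))"
  by (auto simp: coface_S_def obj_S_def PiE_iff)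

lemma sq_pi: "sq_mor n m \<phi> \<Longrightarrow> \<phi> \<in> PiE (obj_S n) (\<lambda>_. obj_S m)"
proof (induction rule: sq_mor.induct)
  case (sq_id n)
  then show ?case by auto
next
  case (sq_step n m \<phi> i e)
  then show ?case using coface_pi[of m i e]
    by (auto simp: compose_def PiE_iff extensional_def)
qed

lemma finS: "finite (Hom_S n m)"
proof -
  have "Hom_S n m \<subseteq> PiE (obj_S n) (\<lambda>_. obj_S m)" using sq_pi by (auto simp: Hom_S_def)
  then show ?thesis by (rule finite_subset) (simp add: finite_PiE fin_objS)
qed

lemma sq_comp: "sq_mor m p \<psi> \<Longrightarrow> sq_mor n m \<phi> \<Longrightarrow> sq_mor n p (compose (obj_S n) \<psi> \<phi>)"
proof (induction arbitrary: \<phi> rule: sq_mor.induct)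
  case (sq_id m)
  have "compose (obj_S n) (\<lambda>x\<in>obj_S m. x) \<phi> = \<phi>"
    using sq_pi[OF sq_id] by (intro Id_compose) (auto simp: PiE_def)
  then show ?case using sq_id by metis
next
  case (sq_step m p \<psi> i e)
  have "compose (obj_S n) (compose (obj_S m) (coface_S (Suc p) i e) \<psi>) \<phi>
      = compose (obj_S n) (coface_S (Suc p) i e) (compose (obj_S n) \<psi> \<phi>)"
    using sq_pi[OF sq_step.prems] by (intro compose_assoc[symmetric]) (auto simp: PiE_def)
  then show ?case using sq_step sq_mor.sq_step by metis
qed

lemma cat0_S: "cat0 obj_S Hom_S"
proof
  show "finite (Hom_S n m)" for n m by (rule finS)
  show "\<phi> \<in> Hom_S n m \<Longrightarrow> \<phi> \<in> PiE (obj_S n) (\<lambda>_. obj_S m)" for \<phi> n m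
    by (simp add: Hom_S_def sq_pi)
  show "(\<lambda>x\<in>obj_S n. x) \<in> Hom_S n n" for n
    by (simp add: Hom_S_def sq_mor.sq_id)
  show "compose (obj_S n) \<psi> \<phi> \<in> Hom_S n p" if "\<phi> \<in> Hom_S n m" "\<psi> \<in> Hom_S m p" for \<phi> \<psi> n m p
    using that by (simp add: Hom_S_def sq_comp)
qed

interpretation S0: cat0 obj_S Hom_S by (rule cat0_S)

lemma coface_inS: "1 \<le> i \<Longrightarrow> i \<le> n \<Longrightarrow> coface_S n i e \<in> Hom_S (n - 1) n"
proof -
  assume i: "1 \<le> i" "i \<le> n"
  then obtain k where n: "n = Suc k" by (cases n) auto
  have "sq_mor k (Suc k) (compose (obj_S k) (coface_S (Suc k) i e) (\<lambda>x\<in>obj_S k. x))"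
    using i n by (intro sq_mor.sq_step sq_mor.sq_id) auto
  moreover have "compose (obj_S k) (coface_S (Suc k) i e) (\<lambda>x\<in>obj_S k. x) = coface_S (Suc k) i e"
    using coface_pi[of k i e] by (intro compose_Id) (auto simp: PiE_def)
  ultimately show ?thesis using n by (simp add: Hom_S_def)
qed

lemma ud_sumS:
  assumes n: "1 \<le> n"
  shows "(\<Sum>\<theta>\<in>Hom_S (n - 1) n. ud_S n \<theta> * G \<theta>) =
    (\<Sum>i=1..n. (-1) ^ (i - 1) * (G (coface_S n i True) - G (coface_S n i False)) :: 'k::field)"
proof -
  have "(\<Sum>\<theta>\<in>Hom_S (n - 1) n. ud_S n \<theta> * G \<theta>)
      = (\<Sum>\<theta>\<in>Hom_S (n - 1) n. \<Sum>i=1..n. (-1) ^ (i - 1) *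
          ((if \<theta> = coface_S n i True then G \<theta> else 0) - (if \<theta> = coface_S n i False then G \<theta> else 0)))"
    unfolding ud_S_def sum_distrib_right by (intro sum.cong refl) (auto simp: algebra_simps)
  also have "\<dots> = (\<Sum>i=1..n. \<Sum>\<theta>\<in>Hom_S (n - 1) n. (-1) ^ (i - 1) *
          ((if \<theta> = coface_S n i True then G \<theta> else 0) - (if \<theta> = coface_S n i False then G \<theta> else 0)))"
    by (rule sum.swap)
  also have "\<dots> = (\<Sum>i=1..n. (-1) ^ (i - 1) * (G (coface_S n i True) - G (coface_S n i False)))"
    using coface_inS by (intro sum.cong refl) (simp add: sum_distrib_left[symmetric] sum_subtractf finS)
  finally show ?thesis .
qed

lemma vsum_udS: "1 \<le> n \<Longrightarrow> vsum (Hom_S (n - 1) n) (ud_S n) V =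
   (\<lambda>x. \<Sum>i=1..n. (-1) ^ (i - 1) * (V (coface_S n i True) x - V (coface_S n i False) x) :: 'k::field)"
  unfolding vsum_def by (rule ext) (rule ud_sumS)

lemma list_ins2:
  assumes ij: "i \<le> j" "j \<le> length x"
  shows "take i (take j x @ b # drop j x) @ a # drop i (take j x @ b # drop j x) =
  take (Suc j) (take i x @ a # drop i x) @ b # drop (Suc j) (take i x @ a # drop i x)"
proof -
  have lj: "length (take j x) = j" and li: "length (take i x) = i" using ij by auto
  have 1: "take i (take j x @ b # drop j x) = take i x" using ij lj by (simp add: take_append min_def)
  have 2: "drop i (take j x @ b # drop j x) = take (j - i) (drop i x) @ b # drop j x"
    using ij lj by (simp add: drop_append drop_take)
  have 3: "take (Suc j) (take i x @ a # drop i x) = take i x @ a # take (j - i) (drop i x)"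
    using ij li by (simp add: take_append Suc_diff_le)
  have 4: "drop (Suc j) (take i x @ a # drop i x) = drop j x"
    using ij li by (simp add: drop_append Suc_diff_le)
  show ?thesis unfolding 1 2 3 4 by simp
qed

lemma cubical: "1 \<le> i \<Longrightarrow> i \<le> j \<Longrightarrow> j \<le> n \<Longrightarrow>
  compose (obj_S (n - 1)) (coface_S (Suc n) i e) (coface_S n j h) =
  compose (obj_S (n - 1)) (coface_S (Suc n) (Suc j) h) (coface_S n i e)"
proof (rule ext)
  fix x assume ij: "1 \<le> i" "i \<le> j" "j \<le> n"
  show "compose (obj_S (n - 1)) (coface_S (Suc n) i e) (coface_S n j h) x =
    compose (obj_S (n - 1)) (coface_S (Suc n) (Suc j) h) (coface_S n i e) x"
  proof (cases "x \<in> obj_S (n - 1)")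
    case True
    then have l: "length x = n - 1" by (simp add: obj_S_def)
    have "coface_S n j h x \<in> obj_S n" "coface_S n i e x \<in> obj_S n" using True ij l
      by (auto simp: coface_S_def obj_S_def)
    then show ?thesis using True ij l list_ins2[of "i - 1" "j - 1" x h e]
      by (simp add: compose_def coface_S_def obj_S_def)
  qed (simp add: compose_def)
qed


lemma dd_S:
  assumes n1: "1 \<le> n"
  shows "(\<Sum>\<theta>\<in>Hom_S n (Suc n). \<Sum>\<theta>'\<in>Hom_S (n - 1) n.
     ud_S (Suc n) \<theta> * ud_S n \<theta>' * F (compose (obj_S (n - 1)) \<theta> \<theta>')) = (0 :: 'k::field)"
proof -
  define s :: "nat \<Rightarrow> 'k" where "s i = (-1) ^ (i - 1)" for i
  define C where "C i e j h = F (compose (obj_S (n - 1)) (coface_S (Suc n) i e) (coface_S n j h))" for i e j h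
  have u: "(\<Sum>\<theta>\<in>Hom_S (Suc n - 1) (Suc n). ud_S (Suc n) \<theta> * H \<theta>) =
    (\<Sum>i=1..Suc n. s i * (H (coface_S (Suc n) i True) - H (coface_S (Suc n) i False)) :: 'k)" for H
    unfolding s_def by (rule ud_sumS) simp
  have "(\<Sum>\<theta>\<in>Hom_S n (Suc n). \<Sum>\<theta>'\<in>Hom_S (n - 1) n.
     ud_S (Suc n) \<theta> * ud_S n \<theta>' * F (compose (obj_S (n - 1)) \<theta> \<theta>'))
    = (\<Sum>\<theta>\<in>Hom_S (Suc n - 1) (Suc n). ud_S (Suc n) \<theta> * (\<Sum>\<theta>'\<in>Hom_S (n - 1) n.
          ud_S n \<theta>' * F (compose (obj_S (n - 1)) \<theta> \<theta>')))"
    by (simp add: sum_distrib_left mult.assoc)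
  also have "\<dots> = (\<Sum>i=1..Suc n. s i * ((\<Sum>j=1..n. s j * (C i True j True - C i True j False))
        - (\<Sum>j=1..n. s j * (C i False j True - C i False j False))))"
    unfolding ud_sumS[OF n1] u C_def s_def ..
  also have "\<dots> = (\<Sum>i=1..Suc n. \<Sum>j=1..n. s i * (s j * ((C i True j True - C i True j False)
        - (C i False j True - C i False j False))))"
    by (simp add: sum_distrib_left sum_subtractf[symmetric] algebra_simps)
  also have "\<dots> = 0"
  proof (rule pair_cancel)
    fix i j assume ij: "1 \<le> i" "i \<le> j" "j \<le> n"
    then obtain j' where j: "j = Suc j'" by (cases j) auto
    have e: "C i e j h = C (Suc j) h i e" for e h
      unfolding C_def using cubical[OF ij] by simp
    show "s i * (s j * ((C i True j True - C i True j False) - (C i False j True - C i False j False))) =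
      - (s (Suc j) * (s i * ((C (Suc j) True i True - C (Suc j) True i False) - (C (Suc j) False i True - C (Suc j) False i False))))"
      unfolding e unfolding s_def j by (simp add: algebra_simps)
  qed
  finally show ?thesis .
qed

lemma aug_d_S: "(\<Sum>\<theta>\<in>Hom_S 0 1. ud_S 1 \<theta>) = (0::'k::field)"
proof -
  have "(\<Sum>\<theta>\<in>Hom_S (1 - 1) 1. ud_S 1 \<theta> * (\<lambda>_. 1::'k) \<theta>) = 0"
    by (subst ud_sumS) simp_all
  then show ?thesis by simp
qed


section \<open>Word model of cube faces\<close>

fun fillw :: "bool option list \<Rightarrow> bool list \<Rightarrow> bool list" where
  "fillw [] x = []"
| "fillw (None # w) x = hd x # fillw w (tl x)"
| "fillw (Some b # w) x = b # fillw w x"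

fun nst :: "bool option list \<Rightarrow> nat" where
  "nst [] = 0"
| "nst (None # w) = Suc (nst w)"
| "nst (Some b # w) = nst w"

fun wsubst :: "bool option list \<Rightarrow> bool option list \<Rightarrow> bool option list" where
  "wsubst [] v = []"
| "wsubst (None # w) v = hd v # wsubst w (tl v)"
| "wsubst (Some b # w) v = Some b # wsubst w v"

definition FW :: "bool option list \<Rightarrow> bool list \<Rightarrow> bool list" where
  "FW w = (\<lambda>x\<in>obj_S (nst w). fillw w x)"

definition cw :: "nat \<Rightarrow> nat \<Rightarrow> bool \<Rightarrow> bool option list" where
  "cw n i e = replicate (i - 1) None @ Some e # replicate (n - i) None"

lemma length_fillw[simp]: "length (fillw w x) = length w"
  by (induction w x rule: fillw.induct) auto

lemma length_wsubst[simp]: "length (wsubst w v) = length w"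
  by (induction w v rule: wsubst.induct) auto

lemma nst_wsubst: "length v = nst w \<Longrightarrow> nst (wsubst w v) = nst v"
proof (induction w v rule: wsubst.induct)
  case (2 w v)
  then obtain a v' where v: "v = a # v'" by (cases v) auto
  then show ?case using 2 by (cases a) auto
qed auto

lemma fillw_wsubst: "length v = nst w \<Longrightarrow> fillw (wsubst w v) x = fillw w (fillw v x)"
proof (induction w arbitrary: v x)
  case (Cons a w)
  show ?case
  proof (cases a)
    case None
    then obtain b v' where v: "v = b # v'" using Cons.prems by (cases v) auto
    then show ?thesis using Cons None by (cases b) auto
  next
    case (Some c)
    then show ?thesis using Cons by auto
  qed
qed simp

lemma nst_le: "nst w \<le> length w"
  by (induction w rule: nst.induct) auto

lemma fillw_rep_app: "k \<le> length x \<Longrightarrow> fillw (replicate k None @ u) x = take k x @ fillw u (drop k x)"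
proof (induction k arbitrary: x)
  case (Suc k)
  then obtain a x' where "x = a # x'" by (cases x) auto
  then show ?case using Suc by auto
qed simp

lemma fillw_rep: "length y = l \<Longrightarrow> fillw (replicate l None) y = y"
  using fillw_rep_app[of l y "[]"] by simp

lemma nst_app[simp]: "nst (u @ v) = nst u + nst v"
  by (induction u rule: nst.induct) auto

lemma nst_rep_None[simp]: "nst (replicate k None) = k"
  by (induction k) auto

lemma nst_rep_Some[simp]: "nst (replicate k (Some b)) = 0"
  by (induction k) auto

lemma nst_cw: "1 \<le> i \<Longrightarrow> i \<le> n \<Longrightarrow> nst (cw n i e) = n - 1"
  by (simp add: cw_def)

lemma length_cw: "1 \<le> i \<Longrightarrow> i \<le> n \<Longrightarrow> length (cw n i e) = n"
  by (simp add: cw_def)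

lemma FW_cw: "1 \<le> i \<Longrightarrow> i \<le> n \<Longrightarrow> FW (cw n i e) = coface_S n i e"
proof (rule ext)
  fix x assume i: "1 \<le> i" "i \<le> n"
  show "FW (cw n i e) x = coface_S n i e x"
  proof (cases "length x = n - 1")
    case True
    have "fillw (cw n i e) x = take (i - 1) x @ e # drop (i - 1) x"
      unfolding cw_def using i True by (simp add: fillw_rep_app fillw_rep)
    then show ?thesis using i True by (simp add: FW_def nst_cw coface_S_def obj_S_def)
  next
    case False
    then show ?thesis using i by (simp add: FW_def nst_cw coface_S_def obj_S_def)
  qed
qed

lemma FW_id: "FW (replicate n None) = (\<lambda>x\<in>obj_S n. x)"
  by (rule ext) (simp add: FW_def fillw_rep obj_S_def)

lemma FW_comp: "length v = nst w \<Longrightarrow> compose (obj_S (nst v)) (FW w) (FW v) = FW (wsubst w v)"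
proof (rule ext)
  fix x assume l: "length v = nst w"
  show "compose (obj_S (nst v)) (FW w) (FW v) x = FW (wsubst w v) x"
    using l by (simp add: compose_def FW_def nst_wsubst fillw_wsubst obj_S_def)
qed

lemma wsubst_rep_app: "k \<le> length v \<Longrightarrow> wsubst (replicate k None @ u) v = take k v @ wsubst u (drop k v)"
proof (induction k arbitrary: v)
  case (Suc k)
  then obtain a v' where "v = a # v'" by (cases v) auto
  then show ?case using Suc by auto
qed simp

lemma wsubst_rep: "length v = l \<Longrightarrow> wsubst (replicate l None) v = v"
  using wsubst_rep_app[of l v "[]"] by simp

lemma wsubst_cw: "1 \<le> i \<Longrightarrow> i \<le> n \<Longrightarrow> length v = n - 1 \<Longrightarrow>
  wsubst (cw n i e) v = take (i - 1) v @ Some e # drop (i - 1) v"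
  unfolding cw_def by (simp add: wsubst_rep_app wsubst_rep)

lemma wsubst_id: "wsubst w (replicate (nst w) None) = w"
  by (induction w rule: nst.induct) auto


lemma sq_FW: "sq_mor n m \<phi> \<Longrightarrow> \<exists>w. length w = m \<and> nst w = n \<and> \<phi> = FW w"
proof (induction rule: sq_mor.induct)
  case (sq_id n)
  then show ?case using FW_id[of n] by (intro exI[of _ "replicate n None"]) simp
next
  case (sq_step n m \<phi> i e)
  then obtain w where w: "length w = m" "nst w = n" "\<phi> = FW w" by auto
  have "compose (obj_S n) (coface_S (Suc m) i e) \<phi> = compose (obj_S (nst w)) (FW (cw (Suc m) i e)) (FW w)"
    using sq_step w by (simp add: FW_cw)
  also have "\<dots> = FW (wsubst (cw (Suc m) i e) w)"
    using sq_step w by (intro FW_comp) (simp add: nst_cw)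
  finally show ?case using sq_step w
    by (intro exI[of _ "wsubst (cw (Suc m) i e) w"]) (simp add: nst_wsubst nst_cw length_cw)
qed

lemma FW_sq: "length w = m \<Longrightarrow> sq_mor (nst w) m (FW w)"
proof (induction m arbitrary: w)
  case 0
  then have "w = []" by simp
  then show ?case using FW_id[of 0] sq_mor.sq_id[of 0] by (metis nst.simps(1) replicate_0)
next
  case (Suc m)
  show ?case
  proof (cases "\<forall>a\<in>set w. a = None")
    case True
    then have "w = replicate (Suc m) None" using Suc.prems by (intro replicate_eqI) auto
    moreover have "nst (replicate (Suc m) None) = Suc m" by simp
    ultimately show ?thesis using FW_id[of "Suc m"] sq_mor.sq_id[of "Suc m"] by metis
  next
    case False
    then obtain p e where p: "p < length w" "w ! p = Some e"
      by (metis in_set_conv_nth not_None_eq)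
    define v where "v = take p w @ drop (Suc p) w"
    have wv: "w = take p w @ Some e # drop (Suc p) w" using p id_take_nth_drop by metis
    have lv: "length v = m" using Suc.prems p by (simp add: v_def)
    have nv: "nst v = nst w" using wv unfolding v_def by (metis nst.simps(3) nst_app)
    have IH: "sq_mor (nst v) m (FW v)" using Suc.IH[OF lv] .
    have "sq_mor (nst v) (Suc m) (compose (obj_S (nst v)) (coface_S (Suc m) (Suc p) e) (FW v))"
      using IH p Suc.prems by (intro sq_mor.sq_step) auto
    moreover have "compose (obj_S (nst v)) (coface_S (Suc m) (Suc p) e) (FW v) = FW w"
    proof -
      have "compose (obj_S (nst v)) (coface_S (Suc m) (Suc p) e) (FW v)
          = compose (obj_S (nst v)) (FW (cw (Suc m) (Suc p) e)) (FW v)"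
        using p Suc.prems by (simp add: FW_cw)
      also have "\<dots> = FW (wsubst (cw (Suc m) (Suc p) e) v)"
        using p Suc.prems lv by (intro FW_comp) (simp add: nst_cw)
      also have "wsubst (cw (Suc m) (Suc p) e) v = take p v @ Some e # drop p v"
        using p Suc.prems lv by (simp add: wsubst_cw)
      also have "\<dots> = w" using p wv unfolding v_def by (simp add: min_def)
      finally show ?thesis .
    qed
    ultimately show ?thesis using nv by simp
  qed
qed

lemma Hom_S_char: "\<phi> \<in> Hom_S n m \<longleftrightarrow> (\<exists>w. length w = m \<and> nst w = n \<and> \<phi> = FW w)"
  unfolding Hom_S_def using sq_FW FW_sq by blast

lemma fillw_inj: "length w = length w' \<Longrightarrow> nst w = n \<Longrightarrow> nst w' = n \<Longrightarrow>
   (\<forall>x. length x = n \<longrightarrow> fillw w x = fillw w' x) \<Longrightarrow> w = w'"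
proof (induction w arbitrary: w' n)
  case Nil
  then show ?case by simp
next
  case (Cons a w)
  then obtain a' w'' where w': "w' = a' # w''" by (cases w') auto
  show ?case
  proof (cases a)
    case None
    then obtain k where n: "n = Suc k" "nst w = k" using Cons.prems by auto
    show ?thesis
    proof (cases a')
      case None
      have "fillw w y = fillw w'' y" if "length y = k" for y
        using Cons.prems(4)[rule_format, of "True # y"] None \<open>a = None\<close> w' that n by simp
      then show ?thesis using Cons.IH[of w'' k] Cons.prems None \<open>a = None\<close> w' n by simp
    next
      case (Some b)
      have "length ((\<not> b) # replicate k False) = n" using n by simp
      then show ?thesis using Cons.prems(4)[rule_format, of "(\<not> b) # replicate k False"] Some \<open>a = None\<close> w'
        by simp
    qed
  next
    case (Some b)
    show ?thesis
    proof (cases a')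
      case None
      define k where "k = nst w''"
      have n: "n = Suc k" using Cons.prems(3) w' None k_def by simp
      have "length ((\<not> b) # replicate k False) = n" using n by simp
      then show ?thesis using Cons.prems(4)[rule_format, of "(\<not> b) # replicate k False"] None \<open>a = Some b\<close> w'
        by simp
    next
      case (Some b')
      have bb: "b = b'" using Cons.prems(4)[rule_format, of "replicate n False"] Some \<open>a = Some b\<close> w' by simp
      have "fillw w y = fillw w'' y" if "length y = n" for y
        using Cons.prems(4)[rule_format, of y] Some \<open>a = Some b\<close> w' that by simp
      then show ?thesis using Cons.IH[of w'' n] Cons.prems Some \<open>a = Some b\<close> w' bb by simp
    qed
  qed
qed

lemma FW_inj: "length w = length w' \<Longrightarrow> nst w = nst w' \<Longrightarrow> FW w = FW w' \<Longrightarrow> w = w'"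
proof -
  assume a: "length w = length w'" "nst w = nst w'" "FW w = FW w'"
  have "fillw w x = fillw w' x" if "length x = nst w" for x
    using fun_cong[OF a(3), of x] a(2) that by (simp add: FW_def obj_S_def)
  then show ?thesis using fillw_inj[OF a(1) refl a(2)[symmetric]] by blast
qed


definition wcons :: "bool option \<Rightarrow> (bool option list \<Rightarrow> 'k::field) \<Rightarrow> bool option list \<Rightarrow> 'k" where
  "wcons a X = (\<lambda>u. case u of [] \<Rightarrow> 0 | b # u' \<Rightarrow> if b = a then X u' else 0)"

definition W :: "nat \<Rightarrow> bool option list set" where "W m = {w. length w = m}"

definition lin :: "nat \<Rightarrow> (bool option list \<Rightarrow> bool option list \<Rightarrow> 'k) \<Rightarrow> (bool option list \<Rightarrow> 'k::field) \<Rightarrow> bool option list \<Rightarrow> 'k" where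
  "lin m T X = (\<lambda>u. \<Sum>w\<in>W m. X w * T w u)"

definition dW :: "bool option list \<Rightarrow> bool option list \<Rightarrow> 'k::field" where
  "dW w = (\<lambda>u. \<Sum>i=1..nst w. (-1) ^ (i - 1) *
      (ind (wsubst w (cw (nst w) i True)) u - ind (wsubst w (cw (nst w) i False)) u))"

fun hW :: "bool option list \<Rightarrow> bool option list \<Rightarrow> 'k::field" where
  "hW [] = 0"
| "hW (None # w) = 0"
| "hW (Some True # w) = ind (None # w) + wcons (Some False) (hW w)"
| "hW (Some False # w) = wcons (Some False) (hW w)"

lemma if_times0: "(if P then x else (0::'a::mult_zero)) * y = (if P then x * y else 0)"
  by simp

lemma sum_ind_mult: "finite A \<Longrightarrow> (\<Sum>w\<in>A. ind u w * f w) = (if u \<in> A then f u else (0::'k::field))"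
  by (simp add: ind_def of_bool_def if_times0)

lemma finW: "finite (W m)"
proof -
  have "W m = {xs. set xs \<subseteq> UNIV \<and> length xs = m}" by (auto simp: W_def)
  then show ?thesis using finite_lists_length_eq[of "UNIV :: bool option set" m] by simp
qed

lemma W_mem: "u \<in> W m \<longleftrightarrow> length u = m"
  by (simp add: W_def)

lemma wcons_ind: "wcons a (ind u) = ind (a # u)"
  by (rule ext) (auto simp: wcons_def ind_def split: list.split)

lemma wcons_add: "wcons a (X + Y) = wcons a X + wcons a Y"
  by (rule ext) (auto simp: wcons_def split: list.split)

lemma wcons_diff: "wcons a (X - Y) = wcons a X - wcons a Y"
  by (rule ext) (auto simp: wcons_def split: list.split)

lemma wcons_zero: "wcons a 0 = 0"
  by (rule ext) (auto simp: wcons_def split: list.split)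

lemma cw_1: "cw (Suc n) 1 e = Some e # replicate n None"
  by (simp add: cw_def)

lemma cw_1': "cw (Suc n) (Suc 0) e = Some e # replicate n None"
  by (simp add: cw_def)

lemma cw_Suc: "1 \<le> i \<Longrightarrow> cw (Suc n) (Suc i) e = None # cw n i e"
  by (cases i) (auto simp: cw_def)

lemma dW_nil: "dW [] = 0"
  by (rule ext) (simp add: dW_def)

lemma dW_Some: "dW (Some b # w) = wcons (Some b) (dW w)"
  by (rule ext) (auto simp: dW_def wcons_def ind_def split: list.split)

lemma dW_None: "dW (None # w) = ind (Some True # w) - ind (Some False # w) - wcons None (dW w)"
proof (rule ext)
  fix u
  define n where "n = nst w"
  define g where "g i = ((-1) ^ (i - 1) *
      (ind (wsubst (None # w) (cw (Suc n) i True)) u - ind (wsubst (None # w) (cw (Suc n) i False)) u) :: 'a)" for i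
  have "dW (None # w) u = (\<Sum>i=1..Suc n. g i)" by (simp add: dW_def g_def n_def)
  also have "\<dots> = g 1 + (\<Sum>i=Suc 1..Suc n. g i)" by (rule sum.atLeast_Suc_atMost) simp
  also have "(\<Sum>i=Suc 1..Suc n. g i) = (\<Sum>i=1..n. g (Suc i))" by (rule sum.shift_bounds_cl_Suc_ivl)
  also have "g 1 = ind (Some True # w) u - ind (Some False # w) u"
    by (simp add: g_def cw_1 cw_1' n_def wsubst_id)
  also have "(\<Sum>i=1..n. g (Suc i)) = - wcons None (dW w) u"
  proof -
    have "(\<Sum>i=1..n. g (Suc i)) = (\<Sum>i=1..n. - ((-1) ^ (i - 1) *
      (ind (None # wsubst w (cw n i True)) u - ind (None # wsubst w (cw n i False)) u)))"
    proof (rule sum.cong)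
      fix i assume "i \<in> {1..n}"
      then obtain i' where i: "i = Suc i'" by (cases i) auto
      show "g (Suc i) = - ((-1) ^ (i - 1) *
        (ind (None # wsubst w (cw n i True)) u - ind (None # wsubst w (cw n i False)) u))"
        using i by (simp add: g_def cw_Suc)
    qed simp
    also have "\<dots> = - wcons None (dW w) u"
    proof (cases u)
      case Nil
      then show ?thesis by (simp add: wcons_def ind_def)
    next
      case (Cons b u')
      show ?thesis
      proof (cases "b = None")
        case True
        then show ?thesis using Cons by (simp add: wcons_def ind_def dW_def n_def sum_negf)
      next
        case False
        then obtain y where "b = Some y" by auto
        then show ?thesis using Cons by (simp add: wcons_def ind_def)
      qed
    qed
    finally show ?thesis .
  qed
  finally show "(dW (None # w) u :: 'a) = (ind (Some True # w) - ind (Some False # w) - wcons None (dW w)) u"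
    by simp
qed

lemma supp_dW: "(dW w u :: 'k::field) \<noteq> 0 \<Longrightarrow> length u = length w \<and> nst u = nst w - 1"
proof -
  assume H: "(dW w u :: 'k) \<noteq> 0"
  define p where "p e i = wsubst w (cw (nst w) i e)" for e i
  have "(\<Sum>i=1..nst w. (-1) ^ (i - 1) * (ind (p True i) u - ind (p False i) u)) \<noteq> (0::'k)"
    using H unfolding dW_def p_def .
  then obtain i where i: "i \<in> {1..nst w}" and
    t0: "(-1) ^ (i - 1) * (ind (p True i) u - ind (p False i) u) \<noteq> (0::'k)"
    by (rule sum.not_neutral_contains_not_neutral)
  have "u = p True i \<or> u = p False i"
  proof (rule ccontr)
    assume "\<not> (u = p True i \<or> u = p False i)"
    then have "ind (p True i) u = (0::'k)" "ind (p False i) u = (0::'k)" by (auto simp: ind_def)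
    then show False using t0 by simp
  qed
  then obtain e where "u = wsubst w (cw (nst w) i e)" unfolding p_def by blast
  then show ?thesis using i by (simp add: nst_wsubst nst_cw length_cw)
qed

lemma supp_hW: "hW w u \<noteq> 0 \<Longrightarrow> length u = length w \<and> nst u = Suc (nst w)"
proof (induction w arbitrary: u rule: hW.induct)
  case (3 w)
  then show ?case by (auto simp: ind_def wcons_def split: list.splits if_splits)
next
  case (4 w)
  then show ?case by (auto simp: wcons_def split: list.splits if_splits)
qed auto

lemma lin_ind: "length u = m \<Longrightarrow> lin m T (ind u) = T u"
  by (rule ext) (simp add: lin_def sum_ind_mult finW W_mem)

lemma lin_add: "lin m T (X + Y) = lin m T X + lin m T Y"
  by (rule ext) (simp add: lin_def algebra_simps sum.distrib)

lemma lin_diff: "lin m T (X - Y) = lin m T X - lin m T Y"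
  by (rule ext) (simp add: lin_def algebra_simps sum_subtractf)

lemma lin_zero: "lin m T 0 = 0"
  by (rule ext) (simp add: lin_def)

lemma lin_zeroT: "lin m (\<lambda>_. 0) X = 0"
  by (rule ext) (simp add: lin_def)

lemma lin_addT: "lin m (\<lambda>w. T1 w + T2 w) X = lin m T1 X + lin m T2 X"
  by (rule ext) (simp add: lin_def algebra_simps sum.distrib)

lemma sum_W_Suc: "(\<Sum>w\<in>W (Suc m). F w) = (\<Sum>v\<in>W m. \<Sum>b\<in>UNIV. F (b # v))"
proof -
  have e: "W (Suc m) = (\<lambda>(b, v). b # v) ` (UNIV \<times> W m)"
    by (auto simp: W_def image_iff length_Suc_conv)
  have i: "inj_on (\<lambda>(b, v). b # v) (UNIV \<times> W m)" by (auto simp: inj_on_def)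
  have "(\<Sum>w\<in>W (Suc m). F w) = (\<Sum>p\<in>UNIV \<times> W m. F (fst p # snd p))"
    unfolding e by (subst sum.reindex[OF i]) (auto intro!: sum.cong)
  also have "\<dots> = (\<Sum>b\<in>UNIV. \<Sum>v\<in>W m. F (b # v))"
    by (simp add: sum.cartesian_product split_def)
  also have "\<dots> = (\<Sum>v\<in>W m. \<Sum>b\<in>UNIV. F (b # v))" by (rule sum.swap)
  finally show ?thesis .
qed

lemma lin_cons: "lin (Suc m) T (wcons a X) = lin m (\<lambda>w. T (a # w)) X"
proof (rule ext)
  fix u
  have "lin (Suc m) T (wcons a X) u = (\<Sum>v\<in>W m. \<Sum>b\<in>UNIV. wcons a X (b # v) * T (b # v) u)"
    by (simp add: lin_def sum_W_Suc)
  also have "\<dots> = (\<Sum>v\<in>W m. X v * T (a # v) u)"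
    by (intro sum.cong refl) (simp add: wcons_def if_times0)
  finally show "lin (Suc m) T (wcons a X) u = lin m (\<lambda>w. T (a # w)) X u" by (simp add: lin_def)
qed

lemma lin_consT: "lin m (\<lambda>w. wcons a (T w)) X = wcons a (lin m T X)"
  by (rule ext) (auto simp: lin_def wcons_def split: list.split)

lemma lin_indcons: "(\<forall>w. X w \<noteq> 0 \<longrightarrow> length w = m) \<Longrightarrow> lin m (\<lambda>w. ind (a # w)) X = wcons a X"
proof (rule ext)
  fix u assume X: "\<forall>w. X w \<noteq> 0 \<longrightarrow> length w = m"
  show "lin m (\<lambda>w. ind (a # w)) X u = wcons a X u"
  proof (cases u)
    case Nil
    then show ?thesis by (simp add: lin_def wcons_def ind_def)
  next
    case (Cons b u')
    have "lin m (\<lambda>w. ind (a # w)) X u = (\<Sum>w\<in>W m. if w = u' then (if b = a then X w else 0) else 0)"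
      using Cons by (auto simp: lin_def ind_def intro!: sum.cong)
    also have "\<dots> = (if u' \<in> W m then (if b = a then X u' else 0) else 0)"
      by (simp add: finW)
    also have "\<dots> = wcons a X u" using Cons X by (auto simp: wcons_def W_def)
    finally show ?thesis .
  qed
qed

lemma supp_dW': "\<forall>u. dW w u \<noteq> 0 \<longrightarrow> length u = length w"
  using supp_dW by blast

lemma key: "lin (length w) dW (hW w) + lin (length w) hW (dW w) =
   ind w - (if nst w = 0 then ind (replicate (length w) (Some False)) else (0 :: _ \<Rightarrow> 'k::field))"
proof (induction w rule: hW.induct)
  case 1
  then show ?case by (rule ext) (simp add: dW_nil lin_def)
next
  case (2 w)
  have "lin (Suc (length w)) hW (dW (None # w)) = (ind (None # w) :: _ \<Rightarrow> 'k)"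
    by (rule ext) (simp add: dW_None lin_diff lin_ind lin_cons lin_zeroT)
  then show ?case by (auto intro!: ext simp: lin_def)
next
  case (3 w)
  let ?m = "length w"
  let ?R = "(if nst w = 0 then ind (replicate (length w) (Some False)) else (0 :: _ \<Rightarrow> 'k))"
  have A: "lin (length (Some True # w)) dW (hW (Some True # w)) = dW (None # w) + wcons (Some False) (lin ?m dW (hW w) :: _ \<Rightarrow> 'k)"
    by (simp add: lin_add lin_ind lin_cons dW_Some lin_consT)
  have B: "lin (length (Some True # w)) hW (dW (Some True # w)) = wcons None (dW w) + wcons (Some False) (lin ?m hW (dW w) :: _ \<Rightarrow> 'k)"
    by (simp add: dW_Some lin_cons lin_addT lin_indcons[OF supp_dW'] lin_consT)
  have "dW (None # w) + wcons (Some False) (lin ?m dW (hW w)) + (wcons None (dW w) + wcons (Some False) (lin ?m hW (dW w)))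
      = ind (Some True # w) - ind (Some False # w) + (wcons (Some False) (lin ?m dW (hW w)) + wcons (Some False) (lin ?m hW (dW w)) :: _ \<Rightarrow> 'k)"
    unfolding dW_None by (simp add: algebra_simps)
  also have "wcons (Some False) (lin ?m dW (hW w)) + wcons (Some False) (lin ?m hW (dW w)) = wcons (Some False) (ind w - ?R)"
    unfolding wcons_add[symmetric] 3 ..
  also have "wcons (Some False) (ind w - ?R) = ind (Some False # w) - wcons (Some False) ?R"
    by (simp add: wcons_diff wcons_ind)
  also have "wcons (Some False) ?R = (if nst (Some True # w) = 0 then ind (replicate (length (Some True # w)) (Some False)) else 0)"
    by (simp add: wcons_ind wcons_zero)
  finally show ?case unfolding A B by (simp add: algebra_simps)
next
  case (4 w)
  let ?m = "length w"
  let ?R = "(if nst w = 0 then ind (replicate (length w) (Some False)) else (0 :: _ \<Rightarrow> 'k))"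
  have A: "lin (length (Some False # w)) dW (hW (Some False # w)) = wcons (Some False) (lin ?m dW (hW w) :: _ \<Rightarrow> 'k)"
    by (simp add: lin_cons dW_Some lin_consT)
  have B: "lin (length (Some False # w)) hW (dW (Some False # w)) = wcons (Some False) (lin ?m hW (dW w) :: _ \<Rightarrow> 'k)"
    by (simp add: dW_Some lin_cons lin_consT)
  have "wcons (Some False) (lin ?m dW (hW w)) + wcons (Some False) (lin ?m hW (dW w)) = wcons (Some False) (ind w - ?R)"
    unfolding wcons_add[symmetric] 4 ..
  also have "wcons (Some False) (ind w - ?R) = ind (Some False # w) - wcons (Some False) ?R"
    by (simp add: wcons_diff wcons_ind)
  also have "wcons (Some False) ?R = (if nst (Some False # w) = 0 then ind (replicate (length (Some False # w)) (Some False)) else 0)"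
    by (simp add: wcons_ind wcons_zero)
  finally show ?case unfolding A B .
qed


definition Sm :: "nat \<Rightarrow> (bool option list \<Rightarrow> 'k) \<Rightarrow> (bool list \<Rightarrow> bool list) \<Rightarrow> 'k::field" where
  "Sm m X = (\<lambda>\<phi>. \<Sum>w\<in>W m. X w * ind (FW w) \<phi>)"

lemma Sm_vsum: "Sm m X = vsum (W m) X (\<lambda>w. ind (FW w))"
  by (simp add: Sm_def vsum_def)

lemma Sm_ind: "length u = m \<Longrightarrow> Sm m (ind u) = ind (FW u)"
  by (rule ext) (simp add: Sm_def sum_ind_mult finW W_mem)

lemma Sm_add: "Sm m (X + Y) = Sm m X + Sm m Y"
  by (rule ext) (simp add: Sm_def algebra_simps sum.distrib)

lemma Sm_diff: "Sm m (X - Y) = Sm m X - Sm m Y"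
  by (rule ext) (simp add: Sm_def algebra_simps sum_subtractf)

lemma Sm_lin: "Sm m (lin m T X) = vsum (W m) X (\<lambda>v. Sm m (T v))"
proof (rule ext)
  fix \<phi>
  have "Sm m (lin m T X) \<phi> = (\<Sum>u\<in>W m. \<Sum>v\<in>W m. X v * (T v u * ind (FW u) \<phi>))"
    unfolding Sm_def lin_def sum_distrib_right mult.assoc ..
  also have "\<dots> = (\<Sum>v\<in>W m. \<Sum>u\<in>W m. X v * (T v u * ind (FW u) \<phi>))"
    by (rule sum.swap)
  also have "\<dots> = vsum (W m) X (\<lambda>v. Sm m (T v)) \<phi>"
    unfolding Sm_def vsum_def sum_distrib_left ..
  finally show "Sm m (lin m T X) \<phi> = vsum (W m) X (\<lambda>v. Sm m (T v)) \<phi>" .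
qed

lemma Sm_mem: "(\<forall>v. X v \<noteq> 0 \<longrightarrow> length v = m \<and> nst v = k) \<Longrightarrow> Sm m X \<in> Pmod Hom_S k m"
proof (unfold S0.pmod_iff, intro allI impI)
  fix \<phi> assume X: "\<forall>v. X v \<noteq> 0 \<longrightarrow> length v = m \<and> nst v = k" and "Sm m X \<phi> \<noteq> 0"
  then obtain v where "v \<in> W m" "X v * ind (FW v) \<phi> \<noteq> 0"
    unfolding Sm_def by (meson sum.not_neutral_contains_not_neutral)
  then have "X v \<noteq> 0" "\<phi> = FW v" by (auto simp: ind_def split: if_splits)
  then show "\<phi> \<in> Hom_S k m" using X Hom_S_char by blast
qed

lemma Sm_formula: "finite I \<Longrightarrow> (\<forall>i\<in>I. length (p i) = m \<and> length (q i) = m) \<Longrightarrow>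
  Sm m (\<lambda>u. \<Sum>i\<in>I. a i * (ind (p i) u - ind (q i) u)) = (\<lambda>\<phi>. \<Sum>i\<in>I. a i * (ind (FW (p i)) \<phi> - ind (FW (q i)) \<phi>))"
proof (rule ext)
  fix \<phi> assume I: "finite I" "\<forall>i\<in>I. length (p i) = m \<and> length (q i) = m"
  have "Sm m (\<lambda>u. \<Sum>i\<in>I. a i * (ind (p i) u - ind (q i) u)) \<phi> =
     (\<Sum>i\<in>I. a i * ((\<Sum>u\<in>W m. ind (p i) u * ind (FW u) \<phi>) - (\<Sum>u\<in>W m. ind (q i) u * ind (FW u) \<phi>)))"
    by (simp add: Sm_def sum_distrib_right sum_distrib_left sum.swap[of _ "W m"] algebra_simps sum_subtractf)
  also have "\<dots> = (\<Sum>i\<in>I. a i * (ind (FW (p i)) \<phi> - ind (FW (q i)) \<phi>))"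
    using I by (intro sum.cong refl) (simp add: sum_ind_mult finW W_mem)
  finally show "Sm m (\<lambda>u. \<Sum>i\<in>I. a i * (ind (p i) u - ind (q i) u)) \<phi> = (\<Sum>i\<in>I. a i * (ind (FW (p i)) \<phi> - ind (FW (q i)) \<phi>))" .
qed

lemma lin_formula: "finite I \<Longrightarrow> (\<forall>i\<in>I. length (p i) = m \<and> length (q i) = m) \<Longrightarrow>
  lin m T (\<lambda>u. \<Sum>i\<in>I. a i * (ind (p i) u - ind (q i) u)) = (\<lambda>x. \<Sum>i\<in>I. a i * (T (p i) x - T (q i) x))"
proof (rule ext)
  fix x assume I: "finite I" "\<forall>i\<in>I. length (p i) = m \<and> length (q i) = m"
  have "lin m T (\<lambda>u. \<Sum>i\<in>I. a i * (ind (p i) u - ind (q i) u)) x =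
     (\<Sum>i\<in>I. a i * ((\<Sum>u\<in>W m. ind (p i) u * T u x) - (\<Sum>u\<in>W m. ind (q i) u * T u x)))"
    by (simp add: lin_def sum_distrib_right sum_distrib_left sum.swap[of _ "W m"] algebra_simps sum_subtractf)
  also have "\<dots> = (\<Sum>i\<in>I. a i * (T (p i) x - T (q i) x))"
    using I by (intro sum.cong refl) (simp add: sum_ind_mult finW W_mem)
  finally show "lin m T (\<lambda>u. \<Sum>i\<in>I. a i * (ind (p i) u - ind (q i) u)) x = (\<Sum>i\<in>I. a i * (T (p i) x - T (q i) x))" .
qed

lemma Sm_sum: "finite I \<Longrightarrow> Sm m (\<lambda>x. \<Sum>i\<in>I. a i * (A i x - B i x)) = (\<lambda>\<phi>. \<Sum>i\<in>I. a i * (Sm m (A i) \<phi> - Sm m (B i) \<phi>))"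
  by (rule ext) (simp add: Sm_def sum_distrib_right sum_distrib_left sum.swap[of _ "W m"] algebra_simps sum_subtractf)

lemma comp_FW_coface: "nst w = n \<Longrightarrow> 1 \<le> i \<Longrightarrow> i \<le> n \<Longrightarrow>
  compose (obj_S (n - 1)) (FW w) (coface_S n i e) = FW (wsubst w (cw n i e))"
  using FW_comp[of "cw n i e" w] by (simp add: FW_cw[symmetric] nst_cw length_cw)

lemmas comp_FW_coface' = comp_FW_coface[simplified]

lemma dP_ind_FW:
  assumes v: "length v = m" "nst v = k" and k: "1 \<le> k"
  shows "dP obj_S Hom_S ud_S k m (ind (FW v)) = (Sm m (dW v) :: _ \<Rightarrow> 'k::field)"
proof -
  have h: "FW v \<in> Hom_S k m" using v Hom_S_char by blast
  have "dP obj_S Hom_S ud_S k m (ind (FW v)) = vsum (Hom_S (k - 1) k) (ud_S k) (\<lambda>\<theta>. ind (compose (obj_S (k - 1)) (FW v) \<theta>))"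
    by (rule S0.dP_ind[OF h])
  also have "\<dots> = (\<lambda>x. \<Sum>i=1..k. (-1) ^ (i - 1) * (ind (compose (obj_S (k - 1)) (FW v) (coface_S k i True)) x
       - ind (compose (obj_S (k - 1)) (FW v) (coface_S k i False)) x) :: 'k)"
    by (rule vsum_udS[OF k])
  also have "\<dots> = (\<lambda>x. \<Sum>i=1..k. (-1) ^ (i - 1) * (ind (FW (wsubst v (cw k i True))) x
       - ind (FW (wsubst v (cw k i False))) x))"
    using v by (intro ext sum.cong refl) (simp add: comp_FW_coface')
  also have "\<dots> = Sm m (dW v)"
    unfolding dW_def using v by (subst Sm_formula) auto
  finally show ?thesis .
qed

lemma dP_Sm:
  assumes k: "1 \<le> k" and X: "\<forall>v. X v \<noteq> 0 \<longrightarrow> length v = m \<and> nst v = k"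
  shows "dP obj_S Hom_S ud_S k m (Sm m X) = (Sm m (lin m dW X) :: _ \<Rightarrow> 'k::field)"
proof -
  have "dP obj_S Hom_S ud_S k m (Sm m X) = vsum (W m) X (\<lambda>w. dP obj_S Hom_S ud_S k m (ind (FW w)))"
    unfolding Sm_vsum S0.dP_vsum ..
  also have "\<dots> = vsum (W m) X (\<lambda>w. Sm m (dW w))"
    unfolding vsum_def
  proof (intro ext sum.cong refl)
    fix \<phi> w assume "w \<in> W m"
    show "X w * dP obj_S Hom_S ud_S k m (ind (FW w)) \<phi> = X w * Sm m (dW w) \<phi>"
    proof (cases "X w = 0")
      case False
      then have "length w = m" "nst w = k" using X by auto
      then show ?thesis using k by (simp add: dP_ind_FW)
    qed simp
  qed
  also have "\<dots> = Sm m (lin m dW X)" by (simp add: Sm_lin)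
  finally show ?thesis .
qed

definition wordof :: "nat \<Rightarrow> nat \<Rightarrow> (bool list \<Rightarrow> bool list) \<Rightarrow> bool option list" where
  "wordof n m \<phi> = (SOME w. length w = m \<and> nst w = n \<and> FW w = \<phi>)"

lemma wordof_FW: "length w = m \<Longrightarrow> nst w = n \<Longrightarrow> wordof n m (FW w) = w"
proof -
  assume a: "length w = m" "nst w = n"
  have "length (wordof n m (FW w)) = m \<and> nst (wordof n m (FW w)) = n \<and> FW (wordof n m (FW w)) = FW w"
    unfolding wordof_def by (rule someI[of _ w]) (simp add: a)
  then show ?thesis using FW_inj a by metis
qed

definition HbS :: "nat \<Rightarrow> nat \<Rightarrow> (bool list \<Rightarrow> bool list) \<Rightarrow> (bool list \<Rightarrow> bool list) \<Rightarrow> 'k::field" where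
  "HbS n m \<phi> = Sm m (hW (wordof n m \<phi>))"

definition zS :: "nat \<Rightarrow> bool list \<Rightarrow> bool list" where
  "zS m = FW (replicate m (Some False))"

lemma Hb_mem_S: "\<phi> \<in> Hom_S n m \<Longrightarrow> HbS n m \<phi> \<in> Pmod Hom_S (Suc n) m"
proof -
  assume "\<phi> \<in> Hom_S n m"
  then obtain w where w: "length w = m" "nst w = n" "\<phi> = FW w" using Hom_S_char by blast
  show ?thesis unfolding HbS_def w(3) wordof_FW[OF w(1,2)]
    by (rule Sm_mem) (use supp_hW w in auto)
qed

lemma HbS_comp: "length w = m \<Longrightarrow> nst w = n \<Longrightarrow> 1 \<le> i \<Longrightarrow> i \<le> n \<Longrightarrow>
  HbS (n - 1) m (compose (obj_S (n - 1)) (FW w) (coface_S n i e)) = Sm m (hW (wsubst w (cw n i e)))"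
  by (simp add: HbS_def comp_FW_coface' wordof_FW nst_wsubst nst_cw length_cw)

lemmas HbS_comp' = HbS_comp[simplified]

lemma Hb_pos_S:
  assumes n: "1 \<le> n" and p: "\<phi> \<in> Hom_S n m"
  shows "dP obj_S Hom_S ud_S (Suc n) m (HbS n m \<phi>) + vsum (Hom_S (n - 1) n) (ud_S n)
     (\<lambda>\<theta>. HbS (n - 1) m (compose (obj_S (n - 1)) \<phi> \<theta>)) = (ind \<phi> :: _ \<Rightarrow> 'k::field)"
proof -
  obtain w where w: "length w = m" "nst w = n" "\<phi> = FW w" using p Hom_S_char by blast
  have 1: "dP obj_S Hom_S ud_S (Suc n) m (HbS n m \<phi>) = (Sm m (lin m dW (hW w)) :: _ \<Rightarrow> 'k)"
    unfolding HbS_def w(3) wordof_FW[OF w(1,2)]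
    by (rule dP_Sm) (use supp_hW w in auto)
  have "vsum (Hom_S (n - 1) n) (ud_S n) (\<lambda>\<theta>. HbS (n - 1) m (compose (obj_S (n - 1)) \<phi> \<theta>))
     = (\<lambda>x. \<Sum>i=1..n. (-1) ^ (i - 1) * (Sm m (hW (wsubst w (cw n i True))) x - Sm m (hW (wsubst w (cw n i False))) x) :: 'k)"
    unfolding vsum_udS[OF n] w(3) using w by (intro ext sum.cong refl) (simp add: HbS_comp')
  also have "\<dots> = Sm m (\<lambda>x. \<Sum>i=1..n. (-1) ^ (i - 1) * (hW (wsubst w (cw n i True)) x - hW (wsubst w (cw n i False)) x))"
    by (simp add: Sm_sum)
  also have "(\<lambda>x. \<Sum>i=1..n. (-1) ^ (i - 1) * (hW (wsubst w (cw n i True)) x - hW (wsubst w (cw n i False)) x)) = lin m hW (dW w)"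
    unfolding dW_def using w by (subst lin_formula) auto
  finally have 2: "vsum (Hom_S (n - 1) n) (ud_S n) (\<lambda>\<theta>. HbS (n - 1) m (compose (obj_S (n - 1)) \<phi> \<theta>)) = (Sm m (lin m hW (dW w)) :: _ \<Rightarrow> 'k)" .
  have "lin m dW (hW w) + lin m hW (dW w) = (ind w :: _ \<Rightarrow> 'k)" using key[of w] w n by simp
  then have "Sm m (lin m dW (hW w) + lin m hW (dW w)) = (ind \<phi> :: _ \<Rightarrow> 'k)"
    by (simp add: Sm_ind[OF w(1)] w(3))
  then show ?thesis unfolding 1 2 Sm_add .
qed

lemma Hb_0_S:
  assumes p: "\<phi> \<in> Hom_S 0 m"
  shows "dP obj_S Hom_S ud_S 1 m (HbS 0 m \<phi>) = (ind \<phi> - ind (zS m) :: _ \<Rightarrow> 'k::field)"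
proof -
  obtain w where w: "length w = m" "nst w = 0" "\<phi> = FW w" using p Hom_S_char by blast
  have 1: "dP obj_S Hom_S ud_S 1 m (HbS 0 m \<phi>) = (Sm m (lin m dW (hW w)) :: _ \<Rightarrow> 'k)"
    unfolding HbS_def w(3) wordof_FW[OF w(1,2)]
    by (rule dP_Sm) (use supp_hW w in auto)
  have d0: "dW w = (0 :: _ \<Rightarrow> 'k)" using w by (simp add: dW_def zero_fun_def)
  have K: "lin m dW (hW w) + lin m hW (dW w) = (ind w - ind (replicate m (Some False)) :: _ \<Rightarrow> 'k)"
    using key[of w] w by simp
  have "lin m dW (hW w) = (ind w - ind (replicate m (Some False)) :: _ \<Rightarrow> 'k)"
    using K unfolding d0 lin_zero by simp
  then show ?thesis unfolding 1 using w by (simp add: Sm_diff Sm_ind zS_def)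
qed

lemma augS: "augcat obj_S Hom_S (ud_S :: nat \<Rightarrow> (bool list \<Rightarrow> bool list) \<Rightarrow> 'k::field) HbS zS"
  apply (rule augcat.intro[OF cat0_S], rule augcat_axioms.intro)
  subgoal for m unfolding Hom_S_char zS_def by (intro exI[of _ "replicate m (Some False)"]) simp
  subgoal by (rule dd_S)
  subgoal by (rule aug_d_S)
  subgoal by (rule Hb_mem_S)
  subgoal by (rule Hb_pos_S)
  subgoal by (rule Hb_0_S)
  done

lemma resS: "proj_resolution TYPE('x) TYPE('y) obj_S Hom_S (ud_S :: nat \<Rightarrow> (bool list \<Rightarrow> bool list) \<Rightarrow> 'k::field)"
  by (rule augcat.resolution[OF augS])


theorem lemma3p1:
  shows "proj_resolution TYPE('x) TYPE('y) obj_D Hom_D (ud_D :: nat \<Rightarrow> (nat \<Rightarrow> nat) \<Rightarrow> 'k::field) \<and>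
         proj_resolution TYPE('x) TYPE('y) obj_S Hom_S (ud_S :: nat \<Rightarrow> (bool list \<Rightarrow> bool list) \<Rightarrow> 'k)"
  using resD resS by blast

end
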